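(* Consider the class $\mathcal{C}$ of third order ordinary differential equations of the form $$y'''=\frac{-3X(x,y)\,(y'')^2+P(x,y)\,y''\,(y')^2+Q(x,y)\,y''\,y'+R(x,y)\,y''+S(x,y)\,(y')^5+L(x,y)\,(y')^4+K(x,y)\,(y')^3+M(x,y)\,(y')^2+N(x,y)\,y'+T(x,y)}{Y(x,y)-X(x,y)\,y'},$$ where $X,Y,P,Q,R,S,L,K,M,N,T$ are arbitrary functions of $(x,y)$ (note that the coefficient of $(y'')^2$ in the numerator is exactly $-3$ times the function $X$ appearing in the denominator). Then $\mathcal{C}$ is invariant under point transformations: for every non-degenerate point change of variables $\tilde x=\tilde x(x,y)$, $\tilde y=\tilde y(x,y)$, every equation of $\mathcal{C}$ is transformed into an equation $\tilde y'''=g(\tilde x,\tilde y,\tilde y',\tilde y'')$ which is again of the same form (with $x,y$ replaced by $\tilde x,\tilde y$, and with some new coefficient functions $\tilde X,\tilde Y,\tilde P,\dots,\tilde T$ of $(\tilde x,\tilde y)$).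
   Context: A point transformation is a change of variables $\tilde x=\tilde x(x,y)$, $\tilde y=\tilde y(x,y)$ on the plane, assumed non-degenerate, i.e. with nonzero Jacobian determinant; derivatives $y',y'',y'''$ transform accordingly by the chain rule when $y$ is regarded as a function of $x$ and $\tilde y$ as a function of $\tilde x$. A class of equations $y'''=f(x,y,y',y'')$ with $f$ in a prescribed set of functions $\mathcal F$ is called point-invariant if, for every $f\in\mathcal F$ and every non-degenerate point transformation, the transformed equation $\tilde y'''=g(\tilde x,\tilde y,\tilde y',\tilde y'')$ has $g\in\mathcal F$. *)

theory Defs
  imports "HOL-Analysis.Analysis"
begin

definition pdx :: "(real \<times> real \<Rightarrow> real) \<Rightarrow> real \<times> real \<Rightarrow> real" where
  "pdx f z = deriv (\<lambda>x. f (x, snd z)) (fst z)"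

definition pdy :: "(real \<times> real \<Rightarrow> real) \<Rightarrow> real \<times> real \<Rightarrow> real" where
  "pdy f z = deriv (\<lambda>y. f (fst z, y)) (snd z)"

fun C_k :: "nat \<Rightarrow> (real \<times> real \<Rightarrow> real) \<Rightarrow> bool" where
  "C_k 0 f = continuous_on UNIV f"
| "C_k (Suc k) f = ((\<forall>z. f differentiable (at z)) \<and> C_k k (pdx f) \<and> C_k k (pdy f))"

text \<open>Right-hand side of the equations of the class C, evaluated at (x,y,y',y'') = (x,y,p,q).\<close>
definition class_rhs ::
  "(real \<Rightarrow> real \<Rightarrow> real) \<Rightarrow> (real \<Rightarrow> real \<Rightarrow> real) \<Rightarrow> (real \<Rightarrow> real \<Rightarrow> real) \<Rightarrow>
   (real \<Rightarrow> real \<Rightarrow> real) \<Rightarrow> (real \<Rightarrow> real \<Rightarrow> real) \<Rightarrow> (real \<Rightarrow> real \<Rightarrow> real) \<Rightarrow>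
   (real \<Rightarrow> real \<Rightarrow> real) \<Rightarrow> (real \<Rightarrow> real \<Rightarrow> real) \<Rightarrow> (real \<Rightarrow> real \<Rightarrow> real) \<Rightarrow>
   (real \<Rightarrow> real \<Rightarrow> real) \<Rightarrow> (real \<Rightarrow> real \<Rightarrow> real) \<Rightarrow>
   real \<Rightarrow> real \<Rightarrow> real \<Rightarrow> real \<Rightarrow> real" where
  "class_rhs X Y P Q R S L K M N T x y p q =
     (- 3 * X x y * q^2 + P x y * q * p^2 + Q x y * q * p + R x y * q
      + S x y * p^5 + L x y * p^4 + K x y * p^3 + M x y * p^2 + N x y * p + T x y)
     / (Y x y - X x y * p)"

text \<open>Transformed curve: along the graph of y, the new coordinates are
  x~(s) = xi(s, y s), y~(s) = eta(s, y s); the derivatives of y~ as a function of x~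
  are obtained by the chain rule: d/dx~ = (1 / x~'(s)) d/ds.\<close>
definition tx :: "(real \<times> real \<Rightarrow> real) \<Rightarrow> (real \<Rightarrow> real) \<Rightarrow> real \<Rightarrow> real" where
  "tx \<xi> y = (\<lambda>s. \<xi> (s, y s))"

definition ty :: "(real \<times> real \<Rightarrow> real) \<Rightarrow> (real \<Rightarrow> real) \<Rightarrow> real \<Rightarrow> real" where
  "ty \<eta> y = (\<lambda>s. \<eta> (s, y s))"

definition tp :: "(real \<times> real \<Rightarrow> real) \<Rightarrow> (real \<times> real \<Rightarrow> real) \<Rightarrow> (real \<Rightarrow> real) \<Rightarrow> real \<Rightarrow> real" where
  "tp \<xi> \<eta> y = (\<lambda>s. deriv (ty \<eta> y) s / deriv (tx \<xi> y) s)"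

definition tq :: "(real \<times> real \<Rightarrow> real) \<Rightarrow> (real \<times> real \<Rightarrow> real) \<Rightarrow> (real \<Rightarrow> real) \<Rightarrow> real \<Rightarrow> real" where
  "tq \<xi> \<eta> y = (\<lambda>s. deriv (tp \<xi> \<eta> y) s / deriv (tx \<xi> y) s)"

definition tr :: "(real \<times> real \<Rightarrow> real) \<Rightarrow> (real \<times> real \<Rightarrow> real) \<Rightarrow> (real \<Rightarrow> real) \<Rightarrow> real \<Rightarrow> real" where
  "tr \<xi> \<eta> y = (\<lambda>s. deriv (tq \<xi> \<eta> y) s / deriv (tx \<xi> y) s)"

end

theory Submission
  imports Defs
begin
definition cfA0 :: "real \<Rightarrow> real \<Rightarrow> real \<Rightarrow> real \<Rightarrow> real \<Rightarrow> real \<Rightarrow> real \<Rightarrow> real \<Rightarrow> real \<Rightarrow> real \<Rightarrow> real \<Rightarrow> real \<Rightarrow> real \<Rightarrow> real \<Rightarrow> real \<Rightarrow> real \<Rightarrow> real \<Rightarrow> real \<Rightarrow> real \<Rightarrow> real \<Rightarrow> real \<Rightarrow> real \<Rightarrow> real \<Rightarrow> real \<Rightarrow> real \<Rightarrow> real \<Rightarrow> real \<Rightarrow> real \<Rightarrow> real \<Rightarrow> real \<Rightarrow> real \<Rightarrow> real" where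
  "cfA0 a b c d X Y P Q R S L K M N T l0 l1 l2 m0 m1 m2 s0 s1 s2 s3 t0 t1 t2 t3 u0 v0 = (R * a * d - R * b * c + 6 * X * a * m0 - 6 * X * c * l0 + Y * a * v0 + 3 * Y * b * m0 - Y * c * u0 - 3 * Y * d * l0)"

definition cfA1 :: "real \<Rightarrow> real \<Rightarrow> real \<Rightarrow> real \<Rightarrow> real \<Rightarrow> real \<Rightarrow> real \<Rightarrow> real \<Rightarrow> real \<Rightarrow> real \<Rightarrow> real \<Rightarrow> real \<Rightarrow> real \<Rightarrow> real \<Rightarrow> real \<Rightarrow> real \<Rightarrow> real \<Rightarrow> real \<Rightarrow> real \<Rightarrow> real \<Rightarrow> real \<Rightarrow> real \<Rightarrow> real \<Rightarrow> real \<Rightarrow> real \<Rightarrow> real \<Rightarrow> real \<Rightarrow> real \<Rightarrow> real \<Rightarrow> real \<Rightarrow> real \<Rightarrow> real" where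
  "cfA1 a b c d X Y P Q R S L K M N T l0 l1 l2 m0 m1 m2 s0 s1 s2 s3 t0 t1 t2 t3 u0 v0 = (Q * a * d - Q * b * c + 6 * X * a * m1 - X * a * v0 + 3 * X * b * m0 - 6 * X * c * l1 + X * c * u0 - 3 * X * d * l0 + 3 * Y * a * m2 + 3 * Y * b * m1 + Y * b * v0 - 3 * Y * c * l2 - 3 * Y * d * l1 - Y * d * u0)"

definition cfA2 :: "real \<Rightarrow> real \<Rightarrow> real \<Rightarrow> real \<Rightarrow> real \<Rightarrow> real \<Rightarrow> real \<Rightarrow> real \<Rightarrow> real \<Rightarrow> real \<Rightarrow> real \<Rightarrow> real \<Rightarrow> real \<Rightarrow> real \<Rightarrow> real \<Rightarrow> real \<Rightarrow> real \<Rightarrow> real \<Rightarrow> real \<Rightarrow> real \<Rightarrow> real \<Rightarrow> real \<Rightarrow> real \<Rightarrow> real \<Rightarrow> real \<Rightarrow> real \<Rightarrow> real \<Rightarrow> real \<Rightarrow> real \<Rightarrow> real \<Rightarrow> real \<Rightarrow> real" where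
  "cfA2 a b c d X Y P Q R S L K M N T l0 l1 l2 m0 m1 m2 s0 s1 s2 s3 t0 t1 t2 t3 u0 v0 = (P * a * d - P * b * c + 3 * X * a * m2 + 3 * X * b * m1 - X * b * v0 - 3 * X * c * l2 - 3 * X * d * l1 + X * d * u0 + 6 * Y * b * m2 - 6 * Y * d * l2)"

definition cfB0 :: "real \<Rightarrow> real \<Rightarrow> real \<Rightarrow> real \<Rightarrow> real \<Rightarrow> real \<Rightarrow> real \<Rightarrow> real \<Rightarrow> real \<Rightarrow> real \<Rightarrow> real \<Rightarrow> real \<Rightarrow> real \<Rightarrow> real \<Rightarrow> real \<Rightarrow> real \<Rightarrow> real \<Rightarrow> real \<Rightarrow> real \<Rightarrow> real \<Rightarrow> real \<Rightarrow> real \<Rightarrow> real \<Rightarrow> real \<Rightarrow> real \<Rightarrow> real \<Rightarrow> real \<Rightarrow> real \<Rightarrow> real \<Rightarrow> real \<Rightarrow> real \<Rightarrow> real" where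
  "cfB0 a b c d X Y P Q R S L K M N T l0 l1 l2 m0 m1 m2 s0 s1 s2 s3 t0 t1 t2 t3 u0 v0 = (R * a * b * c * m0 + R * a * c * d * l0 - R * a^2 * d * m0 - R * b * c^2 * l0 - 2 * T * a * b * c * d + T * a^2 * d^2 + T * b^2 * c^2 + 6 * X * a * c * l0 * m0 - 3 * X * a^2 * m0^2 - 3 * X * c^2 * l0^2 - Y * a * b * c * t0 - Y * a * c * d * s0 + Y * a * c * l0 * v0 + Y * a * c * m0 * u0 + Y * a^2 * d * t0 - Y * a^2 * m0 * v0 + Y * b * c^2 * s0 - Y * c^2 * l0 * u0)"

definition cfB1 :: "real \<Rightarrow> real \<Rightarrow> real \<Rightarrow> real \<Rightarrow> real \<Rightarrow> real \<Rightarrow> real \<Rightarrow> real \<Rightarrow> real \<Rightarrow> real \<Rightarrow> real \<Rightarrow> real \<Rightarrow> real \<Rightarrow> real \<Rightarrow> real \<Rightarrow> real \<Rightarrow> real \<Rightarrow> real \<Rightarrow> real \<Rightarrow> real \<Rightarrow> real \<Rightarrow> real \<Rightarrow> real \<Rightarrow> real \<Rightarrow> real \<Rightarrow> real \<Rightarrow> real \<Rightarrow> real \<Rightarrow> real \<Rightarrow> real \<Rightarrow> real \<Rightarrow> real" where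
  "cfB1 a b c d X Y P Q R S L K M N T l0 l1 l2 m0 m1 m2 s0 s1 s2 s3 t0 t1 t2 t3 u0 v0 = (- 2 * N * a * b * c * d + N * a^2 * d^2 + N * b^2 * c^2 + Q * a * b * c * m0 + Q * a * c * d * l0 - Q * a^2 * d * m0 - Q * b * c^2 * l0 + R * a * b * c * m1 - R * a * b * d * m0 + R * a * c * d * l1 + R * a * d^2 * l0 - R * a^2 * d * m1 - R * b * c * d * l0 - R * b * c^2 * l1 + R * b^2 * c * m0 + X * a * b * c * t0 - 6 * X * a * b * m0^2 + X * a * c * d * s0 + 6 * X * a * c * l0 * m1 - X * a * c * l0 * v0 + 6 * X * a * c * l1 * m0 - X * a * c * m0 * u0 + 6 * X * a * d * l0 * m0 - X * a^2 * d * t0 - 6 * X * a^2 * m0 * m1 + X * a^2 * m0 * v0 + 6 * X * b * c * l0 * m0 - X * b * c^2 * s0 - 6 * X * c * d * l0^2 - 6 * X * c^2 * l0 * l1 + X * c^2 * l0 * u0 - Y * a * b * c * t1 + Y * a * b * d * t0 - 2 * Y * a * b * m0 * v0 - Y * a * c * d * s1 + 3 * Y * a * c * l0 * m2 + Y * a * c * l1 * v0 + 3 * Y * a * c * l2 * m0 + Y * a * c * m1 * u0 + Y * a * d * l0 * v0 + Y * a * d * m0 * u0 - Y * a * d^2 * s0 + Y * a^2 * d * t1 - 3 * Y * a^2 * m0 * m2 - Y * a^2 * m1 * v0 + Y * b * c * d * s0 + Y * b * c * l0 * v0 + Y * b * c * m0 * u0 + Y * b * c^2 * s1 - Y * b^2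 * c * t0 - 2 * Y * c * d * l0 * u0 - 3 * Y * c^2 * l0 * l2 - Y * c^2 * l1 * u0)"

definition cfB2 :: "real \<Rightarrow> real \<Rightarrow> real \<Rightarrow> real \<Rightarrow> real \<Rightarrow> real \<Rightarrow> real \<Rightarrow> real \<Rightarrow> real \<Rightarrow> real \<Rightarrow> real \<Rightarrow> real \<Rightarrow> real \<Rightarrow> real \<Rightarrow> real \<Rightarrow> real \<Rightarrow> real \<Rightarrow> real \<Rightarrow> real \<Rightarrow> real \<Rightarrow> real \<Rightarrow> real \<Rightarrow> real \<Rightarrow> real \<Rightarrow> real \<Rightarrow> real \<Rightarrow> real \<Rightarrow> real \<Rightarrow> real \<Rightarrow> real \<Rightarrow> real \<Rightarrow> real" where
  "cfB2 a b c d X Y P Q R S L K M N T l0 l1 l2 m0 m1 m2 s0 s1 s2 s3 t0 t1 t2 t3 u0 v0 = (- 2 * M * a * b * c * d + M * a^2 * d^2 + M * b^2 * c^2 + P * a * b * c * m0 + P * a * c * d * l0 - P * a^2 * d * m0 - P * b * c^2 * l0 + Q * a * b * c * m1 - Q * a * b * d * m0 + Q * a * c * d * l1 + Q * a * d^2 * l0 - Q * a^2 * d * m1 - Q * b * c * d * l0 - Q * b * c^2 * l1 + Q * b^2 * c * m0 + R * a * b * c * m2 - R * a * b * d * m1 + R * a * c * d * l2 + R * a * d^2 * l1 - R * a^2 * d * m2 - R * b * c * d * l1 - R * b * c^2 * l2 + R * b^2 * c * m1 + X * a * b * c * t1 - X * a * b * d * t0 - 12 * X * a * b * m0 * m1 +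 2 * X * a * b * m0 * v0 + X * a * c * d * s1 + 3 * X * a * c * l0 * m2 + 6 * X * a * c * l1 * m1 - X * a * c * l1 * v0 + 3 * X * a * c * l2 * m0 - X * a * c * m1 * u0 + 6 * X * a * d * l0 * m1 - X * a * d * l0 * v0 + 6 * X * a * d * l1 * m0 - X * a * d * m0 * u0 + X * a * d^2 * s0 - X * a^2 * d * t1 - 3 * X * a^2 * m0 * m2 + X * a^2 * m1 * v0 - 3 * X * a^2 * m1^2 - X * b * c * d * s0 + 6 * X * b * c * l0 * m1 - X * b * c * l0 * v0 + 6 * X * b * c * l1 * m0 - X * b * c * m0 * u0 - X * b * c^2 * s1 + 6 * X * b * d * l0 * m0 + X * b^2 * c * t0 - 3 * X * b^2 * m0^2 - 12 * X * c * d * l0 * l1 + 2 * X * c * d * l0 * u0 - 3 * X * c^2 * l0 * l2 + X * c^2 * l1 * u0 - 3 * X * c^2 * l1^2 - 3 * X * d^2 * l0^2 - Y * a * b * c * t2 + Y * a * b * d * t1 - 6 * Y * a * b * m0 * m2 - 2 * Y * a * b * m1 * v0 - Y * a * c * d * s2 + 3 * Y * a * c * l1 * m2 + 3 * Y * a * c * l2 * m1 + Y * a * c * l2 * v0 + Y * a * c * m2 * u0 + 3 * Y * a * d * l0 * m2 + Y * a * d * l1 * v0 + 3 * Y * a * d * l2 * m0 + Y * a * d * m1 * u0 - Y * a * d^2 * s1 + Y * a^2 * d * t2 - 3 * Y * a^2 * m1 * m2 - Y * a^2 * m2 * v0 + Y * b * c * d * s1 + 3 * Y * b * c * l0 * m2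 + Y * b * c * l1 * v0 + 3 * Y * b * c * l2 * m0 + Y * b * c * m1 * u0 + Y * b * c^2 * s2 + Y * b * d * l0 * v0 + Y * b * d * m0 * u0 - Y * b^2 * c * t1 - Y * b^2 * m0 * v0 - 6 * Y * c * d * l0 * l2 - 2 * Y * c * d * l1 * u0 - 3 * Y * c^2 * l1 * l2 - Y * c^2 * l2 * u0 - Y * d^2 * l0 * u0)"

definition cfB3 :: "real \<Rightarrow> real \<Rightarrow> real \<Rightarrow> real \<Rightarrow> real \<Rightarrow> real \<Rightarrow> real \<Rightarrow> real \<Rightarrow> real \<Rightarrow> real \<Rightarrow> real \<Rightarrow> real \<Rightarrow> real \<Rightarrow> real \<Rightarrow> real \<Rightarrow> real \<Rightarrow> real \<Rightarrow> real \<Rightarrow> real \<Rightarrow> real \<Rightarrow> real \<Rightarrow> real \<Rightarrow> real \<Rightarrow> real \<Rightarrow> real \<Rightarrow> real \<Rightarrow> real \<Rightarrow> real \<Rightarrow> real \<Rightarrow> real \<Rightarrow> real \<Rightarrow> real" where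
  "cfB3 a b c d X Y P Q R S L K M N T l0 l1 l2 m0 m1 m2 s0 s1 s2 s3 t0 t1 t2 t3 u0 v0 = (- 2 * K * a * b * c * d + K * a^2 * d^2 + K * b^2 * c^2 + P * a * b * c * m1 - P * a * b * d * m0 + P * a * c * d * l1 + P * a * d^2 * l0 - P * a^2 * d * m1 - P * b * c * d * l0 - P * b * c^2 * l1 + P * b^2 * c * m0 + Q * a * b * c * m2 - Q * a * b * d * m1 + Q * a * c * d * l2 + Q * a * d^2 * l1 - Q * a^2 * d * m2 - Q * b * c * d * l1 - Q * b * c^2 * l2 + Q * b^2 * c * m1 - R * a * b * d * m2 + R * a * d^2 * l2 - R * b * c * d * l2 + R * b^2 * c * m2 + X * a * b * c * t2 - X * a * b * d * t1 - 6 * X * a * b * m0 * m2 + 2 * X * a * b * m1 * v0 - 6 * X * a * b * m1^2 + X * a * c * d * s2 + 3 * X * a * c * l1 * m2 + 3 * X * a * c * l2 * m1 - X * a * c * l2 * v0 - X * a * c * m2 * u0 + 3 * X * a * d * l0 * m2 + 6 * X * a * d * l1 * m1 - X * a * d * l1 * v0 + 3 * X * a * d * l2 * m0 - X * a * d * m1 * u0 + X * a * d^2 * s1 - X * a^2 * d * t2 - 3 * X * a^2 * m1 * m2 + X * a^2 * m2 * v0 - X * b * c * d * s1 + 3 * X * b * c * l0 * m2 + 6 * X * b * c * l1 * m1 - X * b * c * l1 * v0 + 3 * X * b * c * l2 * m0 - X * b * c * m1 * u0 - X * b * c^2 * s2 + 6 * X * b * d * l0 * m1 - X * b * d * l0 *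 v0 + 6 * X * b * d * l1 * m0 - X * b * d * m0 * u0 + X * b^2 * c * t1 - 6 * X * b^2 * m0 * m1 + X * b^2 * m0 * v0 - 6 * X * c * d * l0 * l2 + 2 * X * c * d * l1 * u0 - 6 * X * c * d * l1^2 - 3 * X * c^2 * l1 * l2 + X * c^2 * l2 * u0 - 6 * X * d^2 * l0 * l1 + X * d^2 * l0 * u0 - Y * a * b * c * t3 + Y * a * b * d * t2 - 6 * Y * a * b * m1 * m2 - 2 * Y * a * b * m2 * v0 - Y * a * c * d * s3 + 6 * Y * a * c * l2 * m2 + 3 * Y * a * d * l1 * m2 + 3 * Y * a * d * l2 * m1 + Y * a * d * l2 * v0 + Y * a * d * m2 * u0 - Y * a * d^2 * s2 + Y * a^2 * d * t3 - 3 * Y * a^2 * m2^2 + Y * b * c * d * s2 + 3 * Y * b * c * l1 * m2 + 3 * Y * b * c * l2 * m1 + Y * b * c * l2 * v0 + Y * b * c * m2 * u0 + Y * b * c^2 * s3 + 3 * Y * b * d * l0 * m2 + Y * b * d * l1 * v0 + 3 * Y * b * d * l2 * m0 + Y * b * d * m1 * u0 - Y * b^2 * c * t2 - 3 * Y * b^2 * m0 * m2 - Y * b^2 * m1 * v0 - 6 * Y * c * d * l1 * l2 - 2 * Y * c * d * l2 * u0 - 3 * Y * c^2 * l2^2 - 3 * Y * d^2 * l0 * l2 - Y * d^2 * l1 * u0)"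

definition cfB4 :: "real \<Rightarrow> real \<Rightarrow> real \<Rightarrow> real \<Rightarrow> real \<Rightarrow> real \<Rightarrow> real \<Rightarrow> real \<Rightarrow> real \<Rightarrow> real \<Rightarrow> real \<Rightarrow> real \<Rightarrow> real \<Rightarrow> real \<Rightarrow> real \<Rightarrow> real \<Rightarrow> real \<Rightarrow> real \<Rightarrow> real \<Rightarrow> real \<Rightarrow> real \<Rightarrow> real \<Rightarrow> real \<Rightarrow> real \<Rightarrow> real \<Rightarrow> real \<Rightarrow> real \<Rightarrow> real \<Rightarrow> real \<Rightarrow> real \<Rightarrow> real \<Rightarrow> real" where
  "cfB4 a b c d X Y P Q R S L K M N T l0 l1 l2 m0 m1 m2 s0 s1 s2 s3 t0 t1 t2 t3 u0 v0 = (- 2 * L * a * b * c * d + L * a^2 * d^2 + L * b^2 * c^2 + P * a * b * c * m2 - P * a * b * d * m1 + P * a * c * d * l2 + P * a * d^2 * l1 - P * a^2 * d * m2 - P * b * c * d * l1 - P * b * c^2 * l2 + P * b^2 * c * m1 - Q * a * b * d * m2 + Q * a * d^2 * l2 - Q * b * c * d * l2 + Q * b^2 * c * m2 + X * a * b * c * t3 - X * a * b * d * t2 - 6 * X * a * b * m1 * m2 + 2 * X * a * b * m2 * v0 + X * a * c * d * s3 + 3 * X * a * d * l1 * m2 + 3 * X * a * d * l2 * m1 - X * a * d * l2 * v0 - X * a * d * m2 * u0 + X * a * d^2 * s2 - X * a^2 * d * t3 - X * b * c * d * s2 + 3 * X * b * c * l1 * m2 + 3 * X * b * c * l2 * m1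 - X * b * c * l2 * v0 - X * b * c * m2 * u0 - X * b * c^2 * s3 + 3 * X * b * d * l0 * m2 + 6 * X * b * d * l1 * m1 - X * b * d * l1 * v0 + 3 * X * b * d * l2 * m0 - X * b * d * m1 * u0 + X * b^2 * c * t2 - 3 * X * b^2 * m0 * m2 + X * b^2 * m1 * v0 - 3 * X * b^2 * m1^2 - 6 * X * c * d * l1 * l2 + 2 * X * c * d * l2 * u0 - 3 * X * d^2 * l0 * l2 + X * d^2 * l1 * u0 - 3 * X * d^2 * l1^2 + Y * a * b * d * t3 - 6 * Y * a * b * m2^2 + 6 * Y * a * d * l2 * m2 - Y * a * d^2 * s3 + Y * b * c * d * s3 + 6 * Y * b * c * l2 * m2 + 3 * Y * b * d * l1 * m2 + 3 * Y * b * d * l2 * m1 + Y * b * d * l2 * v0 + Y * b * d * m2 * u0 - Y * b^2 * c * t3 - 3 * Y * b^2 * m1 * m2 - Y * b^2 * m2 * v0 - 6 * Y * c * d * l2^2 - 3 * Y * d^2 * l1 * l2 - Y * d^2 * l2 * u0)"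

definition cfB5 :: "real \<Rightarrow> real \<Rightarrow> real \<Rightarrow> real \<Rightarrow> real \<Rightarrow> real \<Rightarrow> real \<Rightarrow> real \<Rightarrow> real \<Rightarrow> real \<Rightarrow> real \<Rightarrow> real \<Rightarrow> real \<Rightarrow> real \<Rightarrow> real \<Rightarrow> real \<Rightarrow> real \<Rightarrow> real \<Rightarrow> real \<Rightarrow> real \<Rightarrow> real \<Rightarrow> real \<Rightarrow> real \<Rightarrow> real \<Rightarrow> real \<Rightarrow> real \<Rightarrow> real \<Rightarrow> real \<Rightarrow> real \<Rightarrow> real \<Rightarrow> real \<Rightarrow> real" where
  "cfB5 a b c d X Y P Q R S L K M N T l0 l1 l2 m0 m1 m2 s0 s1 s2 s3 t0 t1 t2 t3 u0 v0 = (- P * a * b * d * m2 + P * a * d^2 * l2 - P * b * c * d * l2 + P * b^2 * c * m2 - 2 * S * a * b * c * d + S * a^2 * d^2 + S * b^2 * c^2 - X * a * b * d * t3 + X * a * d^2 * s3 - X * b * c * d * s3 + 3 * X * b * d * l1 * m2 + 3 * X * b * d * l2 * m1 - X * b * d * l2 * v0 - X * b * d * m2 * u0 + X * b^2 * c * t3 - 3 * X * b^2 * m1 * m2 + X * b^2 * m2 * v0 - 3 * X * d^2 * l1 * l2 + X * d^2 * l2 * u0 + 6 * Y * b * d * l2 * m2 - 3 * Y * b^2 * m2^2 - 3 * Y * d^2 * l2^2)"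

definition nP :: "real \<Rightarrow> real \<Rightarrow> real \<Rightarrow> real \<Rightarrow> real \<Rightarrow> real \<Rightarrow> real \<Rightarrow> real \<Rightarrow> real \<Rightarrow> real \<Rightarrow> real \<Rightarrow> real \<Rightarrow> real \<Rightarrow> real \<Rightarrow> real \<Rightarrow> real \<Rightarrow> real \<Rightarrow> real \<Rightarrow> real \<Rightarrow> real \<Rightarrow> real \<Rightarrow> real \<Rightarrow> real \<Rightarrow> real \<Rightarrow> real \<Rightarrow> real \<Rightarrow> real \<Rightarrow> real \<Rightarrow> real \<Rightarrow> real \<Rightarrow> real \<Rightarrow> real" where
  "nP a b c d X Y P Q R S L K M N T l0 l1 l2 m0 m1 m2 s0 s1 s2 s3 t0 t1 t2 t3 u0 v0 = (- a * b * (cfA1 a b c d X Y P Q R S L K M N T l0 l1 l2 m0 m1 m2 s0 s1 s2 s3 t0 t1 t2 t3 u0 v0) + a^2 * (cfA2 a b c d X Y P Q R S L K M N T l0 l1 l2 m0 m1 m2 s0 s1 s2 s3 t0 t1 t2 t3 u0 v0) + b^2 * (cfA0 a b c d X Y P Q R S L K M N T l0 l1 l2 m0 m1 m2 s0 s1 s2 s3 t0 t1 t2 t3 u0 v0)) / (a*d - b*c)^2"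

definition nQ :: "real \<Rightarrow> real \<Rightarrow> real \<Rightarrow> real \<Rightarrow> real \<Rightarrow> real \<Rightarrow> real \<Rightarrow> real \<Rightarrow> real \<Rightarrow> real \<Rightarrow> real \<Rightarrow> real \<Rightarrow> real \<Rightarrow> real \<Rightarrow> real \<Rightarrow> real \<Rightarrow> real \<Rightarrow> real \<Rightarrow> real \<Rightarrow> real \<Rightarrow> real \<Rightarrow> real \<Rightarrow> real \<Rightarrow> real \<Rightarrow> real \<Rightarrow> real \<Rightarrow> real \<Rightarrow> real \<Rightarrow> real \<Rightarrow> real \<Rightarrow> real \<Rightarrow> real" where
  "nQ a b c d X Y P Q R S L K M N T l0 l1 l2 m0 m1 m2 s0 s1 s2 s3 t0 t1 t2 t3 u0 v0 = (- 2 * a * c * (cfA2 a b c d X Y P Q R S L K M N T l0 l1 l2 m0 m1 m2 s0 s1 s2 s3 t0 t1 t2 t3 u0 v0) + a * d * (cfA1 a b c d X Y P Q R S L K M N T l0 l1 l2 m0 m1 m2 s0 s1 s2 s3 t0 t1 t2 t3 u0 v0) + b * c * (cfA1 a b c d X Y P Q R S L K M N T l0 l1 l2 m0 m1 m2 s0 s1 s2 s3 t0 t1 t2 t3 u0 v0) - 2 * b * d * (cfA0 a b c d X Y P Q R S L K M N T l0 l1 l2 m0 m1 m2 s0 s1 s2 s3 t0 t1 t2 t3 u0 v0)) / (a*d - b*c)^2"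

definition nR :: "real \<Rightarrow> real \<Rightarrow> real \<Rightarrow> real \<Rightarrow> real \<Rightarrow> real \<Rightarrow> real \<Rightarrow> real \<Rightarrow> real \<Rightarrow> real \<Rightarrow> real \<Rightarrow> real \<Rightarrow> real \<Rightarrow> real \<Rightarrow> real \<Rightarrow> real \<Rightarrow> real \<Rightarrow> real \<Rightarrow> real \<Rightarrow> real \<Rightarrow> real \<Rightarrow> real \<Rightarrow> real \<Rightarrow> real \<Rightarrow> real \<Rightarrow> real \<Rightarrow> real \<Rightarrow> real \<Rightarrow> real \<Rightarrow> real \<Rightarrow> real \<Rightarrow> real" where
  "nR a b c d X Y P Q R S L K M N T l0 l1 l2 m0 m1 m2 s0 s1 s2 s3 t0 t1 t2 t3 u0 v0 = (- c * d * (cfA1 a b c d X Y P Q R S L K M N T l0 l1 l2 m0 m1 m2 s0 s1 s2 s3 t0 t1 t2 t3 u0 v0) + c^2 * (cfA2 a b c d X Y P Q R S L K M N T l0 l1 l2 m0 m1 m2 s0 s1 s2 s3 t0 t1 t2 t3 u0 v0) + d^2 * (cfA0 a b c d X Y P Q R S L K M N T l0 l1 l2 m0 m1 m2 s0 s1 s2 s3 t0 t1 t2 t3 u0 v0)) / (a*d - b*c)^2"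

definition nS :: "real \<Rightarrow> real \<Rightarrow> real \<Rightarrow> real \<Rightarrow> real \<Rightarrow> real \<Rightarrow> real \<Rightarrow> real \<Rightarrow> real \<Rightarrow> real \<Rightarrow> real \<Rightarrow> real \<Rightarrow> real \<Rightarrow> real \<Rightarrow> real \<Rightarrow> real \<Rightarrow> real \<Rightarrow> real \<Rightarrow> real \<Rightarrow> real \<Rightarrow> real \<Rightarrow> real \<Rightarrow> real \<Rightarrow> real \<Rightarrow> real \<Rightarrow> real \<Rightarrow> real \<Rightarrow> real \<Rightarrow> real \<Rightarrow> real \<Rightarrow> real \<Rightarrow> real" where
  "nS a b c d X Y P Q R S L K M N T l0 l1 l2 m0 m1 m2 s0 s1 s2 s3 t0 t1 t2 t3 u0 v0 = (a * b^4 * (cfB1 a b c d X Y P Q R S L K M N T l0 l1 l2 m0 m1 m2 s0 s1 s2 s3 t0 t1 t2 t3 u0 v0) - a^2 * b^3 * (cfB2 a b c d X Y P Q R S L K M N T l0 l1 l2 m0 m1 m2 s0 s1 s2 s3 t0 t1 t2 t3 u0 v0) + a^3 * b^2 * (cfB3 a b c d X Y P Q R S L K M N T l0 l1 l2 m0 m1 m2 s0 s1 s2 s3 t0 t1 t2 t3 u0 v0) - a^4 * b * (cfB4 a b c d X Y P Q R S L K M N T l0 l1 l2 m0 m1 m2 s0 s1 s2 s3 t0 t1 t2 t3 u0 v0) + a^5 * (cfB5 a b c d X Y P Q R S L K M N T l0 l1 l2 m0 m1 m2 s0 s1 s2 s3 t0 t1 t2 t3 u0 v0) - b^5 * (cfB0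 a b c d X Y P Q R S L K M N T l0 l1 l2 m0 m1 m2 s0 s1 s2 s3 t0 t1 t2 t3 u0 v0)) / (a*d - b*c)^5"

definition nL :: "real \<Rightarrow> real \<Rightarrow> real \<Rightarrow> real \<Rightarrow> real \<Rightarrow> real \<Rightarrow> real \<Rightarrow> real \<Rightarrow> real \<Rightarrow> real \<Rightarrow> real \<Rightarrow> real \<Rightarrow> real \<Rightarrow> real \<Rightarrow> real \<Rightarrow> real \<Rightarrow> real \<Rightarrow> real \<Rightarrow> real \<Rightarrow> real \<Rightarrow> real \<Rightarrow> real \<Rightarrow> real \<Rightarrow> real \<Rightarrow> real \<Rightarrow> real \<Rightarrow> real \<Rightarrow> real \<Rightarrow> real \<Rightarrow> real \<Rightarrow> real \<Rightarrow> real" where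
  "nL a b c d X Y P Q R S L K M N T l0 l1 l2 m0 m1 m2 s0 s1 s2 s3 t0 t1 t2 t3 u0 v0 = (2 * a * b^3 * c * (cfB2 a b c d X Y P Q R S L K M N T l0 l1 l2 m0 m1 m2 s0 s1 s2 s3 t0 t1 t2 t3 u0 v0) - 4 * a * b^3 * d * (cfB1 a b c d X Y P Q R S L K M N T l0 l1 l2 m0 m1 m2 s0 s1 s2 s3 t0 t1 t2 t3 u0 v0) - 3 * a^2 * b^2 * c * (cfB3 a b c d X Y P Q R S L K M N T l0 l1 l2 m0 m1 m2 s0 s1 s2 s3 t0 t1 t2 t3 u0 v0) + 3 * a^2 * b^2 * d * (cfB2 a b c d X Y P Q R S L K M N T l0 l1 l2 m0 m1 m2 s0 s1 s2 s3 t0 t1 t2 t3 u0 v0) + 4 * a^3 * b * c * (cfB4 a b c d X Y P Q R S L K M N T l0 l1 l2 m0 m1 m2 s0 s1 s2 s3 t0 t1 t2 t3 u0 v0) - 2 * a^3 * b * d * (cfB3 a b c d X Y P Q R S L K M N T l0 l1 l2 m0 m1 m2 s0 s1 s2 s3 t0 t1 t2 t3 u0 v0) - 5 * a^4 * c * (cfB5 a b c d X Y P Q R S L K M N T l0 l1 l2 m0 m1 m2 s0 s1 s2 s3 t0 t1 t2 t3 u0 v0) + a^4 * d * (cfB4 a b c d X Y P Q R S L K M N T l0 l1 l2 m0 m1 m2 s0 s1 s2 s3 t0 t1 t2 t3 u0 v0) - b^4 * c * (cfB1 a b c d X Y P Q R S L K M N T l0 l1 l2 m0 m1 m2 s0 s1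 s2 s3 t0 t1 t2 t3 u0 v0) + 5 * b^4 * d * (cfB0 a b c d X Y P Q R S L K M N T l0 l1 l2 m0 m1 m2 s0 s1 s2 s3 t0 t1 t2 t3 u0 v0)) / (a*d - b*c)^5"

definition nK :: "real \<Rightarrow> real \<Rightarrow> real \<Rightarrow> real \<Rightarrow> real \<Rightarrow> real \<Rightarrow> real \<Rightarrow> real \<Rightarrow> real \<Rightarrow> real \<Rightarrow> real \<Rightarrow> real \<Rightarrow> real \<Rightarrow> real \<Rightarrow> real \<Rightarrow> real \<Rightarrow> real \<Rightarrow> real \<Rightarrow> real \<Rightarrow> real \<Rightarrow> real \<Rightarrow> real \<Rightarrow> real \<Rightarrow> real \<Rightarrow> real \<Rightarrow> real \<Rightarrow> real \<Rightarrow> real \<Rightarrow> real \<Rightarrow> real \<Rightarrow> real \<Rightarrow> real" where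
  "nK a b c d X Y P Q R S L K M N T l0 l1 l2 m0 m1 m2 s0 s1 s2 s3 t0 t1 t2 t3 u0 v0 = (- 6 * a * b^2 * c * d * (cfB2 a b c d X Y P Q R S L K M N T l0 l1 l2 m0 m1 m2 s0 s1 s2 s3 t0 t1 t2 t3 u0 v0) + 3 * a * b^2 * c^2 * (cfB3 a b c d X Y P Q R S L K M N T l0 l1 l2 m0 m1 m2 s0 s1 s2 s3 t0 t1 t2 t3 u0 v0) + 6 * a * b^2 * d^2 * (cfB1 a b c d X Y P Q R S L K M N T l0 l1 l2 m0 m1 m2 s0 s1 s2 s3 t0 t1 t2 t3 u0 v0) + 6 * a^2 * b * c * d * (cfB3 a b c d X Y P Q R S L K M N T l0 l1 l2 m0 m1 m2 s0 s1 s2 s3 t0 t1 t2 t3 u0 v0) - 6 * a^2 * b * c^2 * (cfB4 a b c d X Y P Q R S L K M N T l0 l1 l2 m0 m1 m2 s0 s1 s2 s3 t0 t1 t2 t3 u0 v0) - 3 * a^2 * b * d^2 * (cfB2 a b c d X Y P Q R S L K M N T l0 l1 l2 m0 m1 m2 s0 s1 s2 s3 t0 t1 t2 t3 u0 v0) - 4 * a^3 * c * d * (cfB4 a b c d X Y P Q R S L K M N T l0 l1 l2 m0 m1 m2 s0 s1 s2 s3 t0 t1 t2 t3 u0 v0) + 10 * a^3 * c^2 * (cfB5 a b c d X Y P Q R S L K M N T l0 l1 l2 m0 m1 m2 s0 s1 s2 s3 t0 t1 t2 t3 u0 v0) + a^3 * d^2 * (cfB3 a b c d X Y P Q R S L K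 M N T l0 l1 l2 m0 m1 m2 s0 s1 s2 s3 t0 t1 t2 t3 u0 v0) + 4 * b^3 * c * d * (cfB1 a b c d X Y P Q R S L K M N T l0 l1 l2 m0 m1 m2 s0 s1 s2 s3 t0 t1 t2 t3 u0 v0) - b^3 * c^2 * (cfB2 a b c d X Y P Q R S L K M N T l0 l1 l2 m0 m1 m2 s0 s1 s2 s3 t0 t1 t2 t3 u0 v0) - 10 * b^3 * d^2 * (cfB0 a b c d X Y P Q R S L K M N T l0 l1 l2 m0 m1 m2 s0 s1 s2 s3 t0 t1 t2 t3 u0 v0)) / (a*d - b*c)^5"

definition nM :: "real \<Rightarrow> real \<Rightarrow> real \<Rightarrow> real \<Rightarrow> real \<Rightarrow> real \<Rightarrow> real \<Rightarrow> real \<Rightarrow> real \<Rightarrow> real \<Rightarrow> real \<Rightarrow> real \<Rightarrow> real \<Rightarrow> real \<Rightarrow> real \<Rightarrow> real \<Rightarrow> real \<Rightarrow> real \<Rightarrow> real \<Rightarrow> real \<Rightarrow> real \<Rightarrow> real \<Rightarrow> real \<Rightarrow> real \<Rightarrow> real \<Rightarrow> real \<Rightarrow> real \<Rightarrow> real \<Rightarrow> real \<Rightarrow> real \<Rightarrow> real \<Rightarrow> real" where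
  "nM a b c d X Y P Q R S L K M N T l0 l1 l2 m0 m1 m2 s0 s1 s2 s3 t0 t1 t2 t3 u0 v0 = (6 * a * b * c * d^2 * (cfB2 a b c d X Y P Q R S L K M N T l0 l1 l2 m0 m1 m2 s0 s1 s2 s3 t0 t1 t2 t3 u0 v0) - 6 * a * b * c^2 * d * (cfB3 a b c d X Y P Q R S L K M N T l0 l1 l2 m0 m1 m2 s0 s1 s2 s3 t0 t1 t2 t3 u0 v0) + 4 * a * b * c^3 * (cfB4 a b c d X Y P Q R S L K M N T l0 l1 l2 m0 m1 m2 s0 s1 s2 s3 t0 t1 t2 t3 u0 v0) - 4 * a * b * d^3 * (cfB1 a b c d X Y P Q R S L K M N T l0 l1 l2 m0 m1 m2 s0 s1 s2 s3 t0 t1 t2 t3 u0 v0) - 3 * a^2 * c * d^2 * (cfB3 a b c d X Y P Q R S L K M N T l0 l1 l2 m0 m1 m2 s0 s1 s2 s3 t0 t1 t2 t3 u0 v0) + 6 * a^2 * c^2 * d * (cfB4 a b c d X Y P Q R S L K M N T l0 l1 l2 m0 m1 m2 s0 s1 s2 s3 t0 t1 t2 t3 u0 v0) - 10 * a^2 * c^3 * (cfB5 a b c d X Y P Q R S L K M N T l0 l1 l2 m0 m1 m2 s0 s1 s2 s3 t0 t1 t2 t3 u0 v0) + a^2 * d^3 * (cfB2 a b c d X Y P Q R S L K M N T l0 l1 l2 m0 m1 m2 s0 s1 s2 s3 t0 t1 t2 t3 u0 v0) - 6 * b^2 * c * d^2 * (cfB1 a b c d X Y P Q R S L K M N T l0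 l1 l2 m0 m1 m2 s0 s1 s2 s3 t0 t1 t2 t3 u0 v0) + 3 * b^2 * c^2 * d * (cfB2 a b c d X Y P Q R S L K M N T l0 l1 l2 m0 m1 m2 s0 s1 s2 s3 t0 t1 t2 t3 u0 v0) - b^2 * c^3 * (cfB3 a b c d X Y P Q R S L K M N T l0 l1 l2 m0 m1 m2 s0 s1 s2 s3 t0 t1 t2 t3 u0 v0) + 10 * b^2 * d^3 * (cfB0 a b c d X Y P Q R S L K M N T l0 l1 l2 m0 m1 m2 s0 s1 s2 s3 t0 t1 t2 t3 u0 v0)) / (a*d - b*c)^5"

definition nN :: "real \<Rightarrow> real \<Rightarrow> real \<Rightarrow> real \<Rightarrow> real \<Rightarrow> real \<Rightarrow> real \<Rightarrow> real \<Rightarrow> real \<Rightarrow> real \<Rightarrow> real \<Rightarrow> real \<Rightarrow> real \<Rightarrow> real \<Rightarrow> real \<Rightarrow> real \<Rightarrow> real \<Rightarrow> real \<Rightarrow> real \<Rightarrow> real \<Rightarrow> real \<Rightarrow> real \<Rightarrow> real \<Rightarrow> real \<Rightarrow> real \<Rightarrow> real \<Rightarrow> real \<Rightarrow> real \<Rightarrow> real \<Rightarrow> real \<Rightarrow> real \<Rightarrow> real" where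
  "nN a b c d X Y P Q R S L K M N T l0 l1 l2 m0 m1 m2 s0 s1 s2 s3 t0 t1 t2 t3 u0 v0 = (- 2 * a * c * d^3 * (cfB2 a b c d X Y P Q R S L K M N T l0 l1 l2 m0 m1 m2 s0 s1 s2 s3 t0 t1 t2 t3 u0 v0) + 3 * a * c^2 * d^2 * (cfB3 a b c d X Y P Q R S L K M N T l0 l1 l2 m0 m1 m2 s0 s1 s2 s3 t0 t1 t2 t3 u0 v0) - 4 * a * c^3 * d * (cfB4 a b c d X Y P Q R S L K M N T l0 l1 l2 m0 m1 m2 s0 s1 s2 s3 t0 t1 t2 t3 u0 v0) + 5 * a * c^4 * (cfB5 a b c d X Y P Q R S L K M N T l0 l1 l2 m0 m1 m2 s0 s1 s2 s3 t0 t1 t2 t3 u0 v0) + a * d^4 * (cfB1 a b c d X Y P Q R S L K M N T l0 l1 l2 m0 m1 m2 s0 s1 s2 s3 t0 t1 t2 t3 u0 v0) + 4 * b * c * d^3 * (cfB1 a b c d X Y P Q R S L K M N T l0 l1 l2 m0 m1 m2 s0 s1 s2 s3 t0 t1 t2 t3 u0 v0) - 3 * b * c^2 * d^2 * (cfB2 a b c d X Y P Q R S L K M N T l0 l1 l2 m0 m1 m2 s0 s1 s2 s3 t0 t1 t2 t3 u0 v0) + 2 * b * c^3 * d * (cfB3 a b c d X Y P Q R S L K M N T l0 l1 l2 m0 m1 m2 s0 s1 s2 s3 t0 t1 t2 t3 u0 v0) - b * c^4 * (cfB4 a b c d X Y P Q R S L K M N T l0 l1 l2 m0 m1 m2 s0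 s1 s2 s3 t0 t1 t2 t3 u0 v0) - 5 * b * d^4 * (cfB0 a b c d X Y P Q R S L K M N T l0 l1 l2 m0 m1 m2 s0 s1 s2 s3 t0 t1 t2 t3 u0 v0)) / (a*d - b*c)^5"

definition nT :: "real \<Rightarrow> real \<Rightarrow> real \<Rightarrow> real \<Rightarrow> real \<Rightarrow> real \<Rightarrow> real \<Rightarrow> real \<Rightarrow> real \<Rightarrow> real \<Rightarrow> real \<Rightarrow> real \<Rightarrow> real \<Rightarrow> real \<Rightarrow> real \<Rightarrow> real \<Rightarrow> real \<Rightarrow> real \<Rightarrow> real \<Rightarrow> real \<Rightarrow> real \<Rightarrow> real \<Rightarrow> real \<Rightarrow> real \<Rightarrow> real \<Rightarrow> real \<Rightarrow> real \<Rightarrow> real \<Rightarrow> real \<Rightarrow> real \<Rightarrow> real \<Rightarrow> real" where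
  "nT a b c d X Y P Q R S L K M N T l0 l1 l2 m0 m1 m2 s0 s1 s2 s3 t0 t1 t2 t3 u0 v0 = (- c * d^4 * (cfB1 a b c d X Y P Q R S L K M N T l0 l1 l2 m0 m1 m2 s0 s1 s2 s3 t0 t1 t2 t3 u0 v0) + c^2 * d^3 * (cfB2 a b c d X Y P Q R S L K M N T l0 l1 l2 m0 m1 m2 s0 s1 s2 s3 t0 t1 t2 t3 u0 v0) - c^3 * d^2 * (cfB3 a b c d X Y P Q R S L K M N T l0 l1 l2 m0 m1 m2 s0 s1 s2 s3 t0 t1 t2 t3 u0 v0) + c^4 * d * (cfB4 a b c d X Y P Q R S L K M N T l0 l1 l2 m0 m1 m2 s0 s1 s2 s3 t0 t1 t2 t3 u0 v0) - c^5 * (cfB5 a b c d X Y P Q R S L K M N T l0 l1 l2 m0 m1 m2 s0 s1 s2 s3 t0 t1 t2 t3 u0 v0) + d^5 * (cfB0 a b c d X Y P Q R S L K M N T l0 l1 l2 m0 m1 m2 s0 s1 s2 s3 t0 t1 t2 t3 u0 v0)) / (a*d - b*c)^5"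

lemma Ah_eq:
  "(Y - X*p)*((v0 + 3*m2*p)*(a+b*p) - (u0 + 3*l2*p)*(c+d*p)) + (a*d-b*c)*(R + Q*p + P*p^2)
   + 3*((a*X+b*Y)*(m0+m1*p+m2*p^2) - (c*X+d*Y)*(l0+l1*p+l2*p^2))
   + 3*X*((m0+m1*p+m2*p^2)*(a+b*p) - (c+d*p)*(l0+l1*p+l2*p^2))
   = (cfA0 a b c d X Y P Q R S L K M N T l0 l1 l2 m0 m1 m2 s0 s1 s2 s3 t0 t1 t2 t3 u0 v0) + (cfA1 a b c d X Y P Q R S L K M N T l0 l1 l2 m0 m1 m2 s0 s1 s2 s3 t0 t1 t2 t3 u0 v0) * p + (cfA2 a b c d X Y P Q R S L K M N T l0 l1 l2 m0 m1 m2 s0 s1 s2 s3 t0 t1 t2 t3 u0 v0) * p^2"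
  unfolding cfA0_def cfA1_def cfA2_def by algebra

lemma Bh_eq:
  "(a*d-b*c)*(Y - X*p)*((t0+t1*p+t2*p^2+t3*p^3)*(a+b*p) - (c+d*p)*(s0+s1*p+s2*p^2+s3*p^3))
   + (a*d-b*c)^2*(T + N*p + M*p^2 + K*p^3 + L*p^4 + S*p^5)
   - ((m0+m1*p+m2*p^2)*(a+b*p) - (c+d*p)*(l0+l1*p+l2*p^2))*(Y - X*p)*((v0 + 3*m2*p)*(a+b*p) - (u0 + 3*l2*p)*(c+d*p))
   - (a*d-b*c)*((m0+m1*p+m2*p^2)*(a+b*p) - (c+d*p)*(l0+l1*p+l2*p^2))*(R + Q*p + P*p^2)
   - 3*X*((m0+m1*p+m2*p^2)*(a+b*p) - (c+d*p)*(l0+l1*p+l2*p^2))^2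
   = (cfB0 a b c d X Y P Q R S L K M N T l0 l1 l2 m0 m1 m2 s0 s1 s2 s3 t0 t1 t2 t3 u0 v0) + (cfB1 a b c d X Y P Q R S L K M N T l0 l1 l2 m0 m1 m2 s0 s1 s2 s3 t0 t1 t2 t3 u0 v0) * p + (cfB2 a b c d X Y P Q R S L K M N T l0 l1 l2 m0 m1 m2 s0 s1 s2 s3 t0 t1 t2 t3 u0 v0) * p^2 + (cfB3 a b c d X Y P Q R S L K M N T l0 l1 l2 m0 m1 m2 s0 s1 s2 s3 t0 t1 t2 t3 u0 v0) * p^3 + (cfB4 a b c d X Y P Q R S L K M N T l0 l1 l2 m0 m1 m2 s0 s1 s2 s3 t0 t1 t2 t3 u0 v0) * p^4 + (cfB5 a b c d X Y P Q R S L K M N T l0 l1 l2 m0 m1 m2 s0 s1 s2 s3 t0 t1 t2 t3 u0 v0) * p^5"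
  unfolding cfB0_def cfB1_def cfB2_def cfB3_def cfB4_def cfB5_def by algebra

lemma core:
  fixes a b c d p q r X Y lamA muA lamB muB el em A B :: real
  assumes "(Y - X*p)*r = -3*X*q^2 + A*q + B"
  shows "(a*d-b*c)*(Y-X*p)*((a+b*p)*((muB+em*q+d*r)*(a+b*p)-(c+d*p)*(lamB+el*q+b*r))
           -3*(lamA+b*q)*((muA*(a+b*p)-(c+d*p)*lamA)+(a*d-b*c)*q))
       = -3*(a*X+b*Y)*((muA*(a+b*p)-(c+d*p)*lamA)+(a*d-b*c)*q)^2
         + (a+b*p)*((muA*(a+b*p)-(c+d*p)*lamA)+(a*d-b*c)*q)*
           ((Y-X*p)*(em*(a+b*p)-el*(c+d*p)) + (a*d-b*c)*A + 3*((a*X+b*Y)*muA-(c*X+d*Y)*lamA) + 3*X*(muA*(a+b*p)-(c+d*p)*lamA))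
         + (a+b*p)*((a*d-b*c)*(Y-X*p)*(muB*(a+b*p)-(c+d*p)*lamB) + (a*d-b*c)^2*B
            - (muA*(a+b*p)-(c+d*p)*lamA)*(Y-X*p)*(em*(a+b*p)-el*(c+d*p))
            - (a*d-b*c)*(muA*(a+b*p)-(c+d*p)*lamA)*A - 3*X*(muA*(a+b*p)-(c+d*p)*lamA)^2)"
  using assms by algebra

lemma quad_poly:
  fixes a b c d z f0 f1 f2 :: real
  shows "(- a*b*f1 + a^2*f2 + b^2*f0)*z^2 + (- 2*a*c*f2 + a*d*f1 + b*c*f1 - 2*b*d*f0)*z + (- c*d*f1 + c^2*f2 + d^2*f0) = f0*(d-b*z)^2 + f1*(d-b*z)*(a*z-c) + f2*(a*z-c)^2"
  by algebra

lemma quint_poly: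
  fixes a b c d z g0 g1 g2 g3 g4 g5 :: real
  shows "(a*b^4*g1 - a^2*b^3*g2 + a^3*b^2*g3 - a^4*b*g4 + a^5*g5 - b^5*g0)*z^5 + (2*a*b^3*c*g2 - 4*a*b^3*d*g1 - 3*a^2*b^2*c*g3 + 3*a^2*b^2*d*g2 + 4*a^3*b*c*g4 - 2*a^3*b*d*g3 - 5*a^4*c*g5 + a^4*d*g4 - b^4*c*g1 + 5*b^4*d*g0)*z^4 + (- 6*a*b^2*c*d*g2 + 3*a*b^2*c^2*g3 + 6*a*b^2*d^2*g1 + 6*a^2*b*c*d*g3 - 6*a^2*b*c^2*g4 - 3*a^2*b*d^2*g2 - 4*a^3*c*d*g4 + 10*a^3*c^2*g5 + a^3*d^2*g3 + 4*b^3*c*d*g1 - b^3*c^2*g2 - 10*b^3*d^2*g0)*z^3 + (6*a*b*c*d^2*g2 - 6*a*b*c^2*d*g3 + 4*a*b*c^3*g4 - 4*a*b*d^3*g1 - 3*a^2*c*d^2*g3 + 6*a^2*c^2*d*g4 - 10*a^2*c^3*g5 + a^2*d^3*g2 - 6*b^2*c*d^2*g1 + 3*b^2*c^2*d*g2 - b^2*c^3*g3 + 10*b^2*d^3*g0)*z^2 + (- 2*a*c*d^3*g2 + 3*a*c^2*d^2*g3 - 4*a*c^3*d*g4 + 5*a*c^4*g5 + a*d^4*g1 + 4*b*c*d^3*g1 - 3*b*c^2*d^2*g2 + 2*b*c^3*d*g3 - b*c^4*g4 - 5*b*d^4*g0)*z + (- c*d^4*g1 + c^2*d^3*g2 - c^3*d^2*g3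 + c^4*d*g4 - c^5*g5 + d^5*g0) = g0*(d-b*z)^5*(a*z-c)^0 + g1*(d-b*z)^4*(a*z-c)^1 + g2*(d-b*z)^3*(a*z-c)^2 + g3*(d-b*z)^2*(a*z-c)^3 + g4*(d-b*z)^1*(a*z-c)^4 + g5*(d-b*z)^0*(a*z-c)^5"
  by algebra

lemma pt_rel:
  fixes a b c d p :: real
  assumes "a+b*p \<noteq> 0"
  shows "d - b*((c+d*p)/(a+b*p)) = (a*d-b*c)/(a+b*p)" "a*((c+d*p)/(a+b*p)) - c = (a*d-b*c)*p/(a+b*p)"
  using assms by (simp_all add: field_simps)

lemma quad_fin:
  fixes J Lm p f0 f1 f2 :: real
  assumes "J \<noteq> 0" "Lm \<noteq> 0"
  shows "(f0*(J/Lm)^2 + f1*(J/Lm)*(J*p/Lm) + f2*(J*p/Lm)^2)/J^2 = (f0 + f1*p + f2*p^2)/Lm^2"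
  using assms by (simp add: field_simps power2_eq_square)

lemma quint_fin:
  fixes J Lm p g0 g1 g2 g3 g4 g5 :: real
  assumes "J \<noteq> 0" "Lm \<noteq> 0"
  shows "(g0*(J/Lm)^5*(J*p/Lm)^0 + g1*(J/Lm)^4*(J*p/Lm)^1 + g2*(J/Lm)^3*(J*p/Lm)^2 + g3*(J/Lm)^2*(J*p/Lm)^3 + g4*(J/Lm)^1*(J*p/Lm)^4 + g5*(J/Lm)^0*(J*p/Lm)^5)/J^5 = (g0 + g1*p + g2*p^2 + g3*p^3 + g4*p^4 + g5*p^5)/Lm^5"
proof -
  have pw: "(J/Lm)^m*(J*p/Lm)^k = J^(m+k)*p^k/Lm^(m+k)" for m k
    by (simp add: power_divide power_mult_distrib power_add)
  show ?thesis unfolding mult.assoc pw using assms by (simp add: field_simps)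
qed

lemma fin_lem:
  fixes J D Lm zz Xt W Ah Bh :: real
  assumes "J \<noteq> 0" "D \<noteq> 0" "Lm \<noteq> 0" "J*D*zz = -3*Xt*W^2 + Lm*W*Ah + Lm*Bh"
  shows "zz/Lm^5 = (-3*Xt*(W/Lm^3)^2 + (W/Lm^3)*(Ah/Lm^2) + Bh/Lm^5)/(J*D/Lm)"
proof -
  have "(-3*Xt*(W/Lm^3)^2 + (W/Lm^3)*(Ah/Lm^2) + Bh/Lm^5)/(J*D/Lm) = (-3*Xt*W^2 + Lm*W*Ah + Lm*Bh)/(Lm^5*(J*D))"
    using assms by (simp add: field_simps eval_nat_numeral)
  also have "\<dots> = (J*D*zz)/(Lm^5*(J*D))" by (metis assms(4))
  also have "\<dots> = zz/Lm^5" using assms(1-3) by simp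
  finally show ?thesis by simp
qed

lemma divsum2:
  fixes x0 x1 x2 J z :: real
  shows "(x2/J)*z^2 + (x1/J)*z + x0/J = (x2*z^2 + x1*z + x0)/J"
  by (simp add: add_divide_distrib)

lemma divsum5:
  fixes x0 x1 x2 x3 x4 x5 J z :: real
  shows "(x5/J)*z^5 + (x4/J)*z^4 + (x3/J)*z^3 + (x2/J)*z^2 + (x1/J)*z + x0/J = (x5*z^5 + x4*z^4 + x3*z^3 + x2*z^2 + x1*z + x0)/J"
  by (simp add: add_divide_distrib)


lemma rearr:
  fixes x Q Z a2 a1 a0 b5 b4 b3 b2 b1 b0 :: real
  shows "-3*x*Q^2 + a2*Q*Z^2 + a1*Q*Z + a0*Q + b5*Z^5 + b4*Z^4 + b3*Z^3 + b2*Z^2 + b1*Z + b0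
    = -3*x*Q^2 + Q*(a2*Z^2 + a1*Z + a0) + (b5*Z^5 + b4*Z^4 + b3*Z^3 + b2*Z^2 + b1*Z + b0)"
  by (simp add: algebra_simps)

lemma alg_main:
  fixes a b c d X Y P Q R S L K M N T l0 l1 l2 m0 m1 m2 s0 s1 s2 s3 t0 t1 t2 t3 u0 v0
        p q r Lm Mu Lm1 Mu1 Lm2 Mu2 :: real
  assumes J: "a*d - b*c \<noteq> 0" and lm: "Lm \<noteq> 0" and Dn: "Y - X*p \<noteq> 0"
   and r: "r = (-3*X*q^2 + P*q*p^2 + Q*q*p + R*q + S*p^5 + L*p^4 + K*p^3 + M*p^2 + N*p + T)/(Y - X*p)"
   and Lm: "Lm = a + b*p" and Mu: "Mu = c + d*p"
   and Lm1: "Lm1 = l0 + l1*p + l2*p^2 + b*q" and Mu1: "Mu1 = m0 + m1*p + m2*p^2 + d*q"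
   and Lm2: "Lm2 = s0 + s1*p + s2*p^2 + s3*p^3 + (u0 + 3*l2*p)*q + b*r"
   and Mu2: "Mu2 = t0 + t1*p + t2*p^2 + t3*p^3 + (v0 + 3*m2*p)*q + d*r"
  shows "(c*X+d*Y) - (a*X+b*Y)*(Mu/Lm) \<noteq> 0 \<and>
    (((Mu2*Lm - Mu*Lm2)*Lm - 3*Lm1*(Mu1*Lm - Mu*Lm1))/Lm^4)/Lm
    = (-3*(a*X+b*Y)*((((Mu1*Lm - Mu*Lm1)/Lm^2)/Lm))^2 + (nP a b c d X Y P Q R S L K M N T l0 l1 l2 m0 m1 m2 s0 s1 s2 s3 t0 t1 t2 t3 u0 v0)*((((Mu1*Lm - Mu*Lm1)/Lm^2)/Lm))*(Mu/Lm)^2 + (nQ a b c d X Y P Q R S L K M N T l0 l1 l2 m0 m1 m2 s0 s1 s2 s3 t0 t1 t2 t3 u0 v0)*((((Mu1*Lm - Mu*Lm1)/Lm^2)/Lm))*(Mu/Lm) + (nR a b c d X Y P Q R S L K M N T l0 l1 l2 m0 m1 m2 s0 s1 s2 s3 t0 t1 t2 t3 u0 v0)*((((Mu1*Lm - Mu*Lm1)/Lm^2)/Lm)) + (nS a b c d X Y P Q R S L K M N T l0 l1 l2 m0 m1 m2 s0 s1 s2 s3 t0 t1 t2 t3 u0 v0)*(Mu/Lm)^5 + (nL a b c d X Y P Q R S L K M N T l0 l1 l2 m0 m1 m2 s0 s1 s2 s3 t0 t1 t2 t3 u0 v0)*(Mu/Lm)^4 + (nK a b c d X Y P Q R S L K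 M N T l0 l1 l2 m0 m1 m2 s0 s1 s2 s3 t0 t1 t2 t3 u0 v0)*(Mu/Lm)^3 + (nM a b c d X Y P Q R S L K M N T l0 l1 l2 m0 m1 m2 s0 s1 s2 s3 t0 t1 t2 t3 u0 v0)*(Mu/Lm)^2 + (nN a b c d X Y P Q R S L K M N T l0 l1 l2 m0 m1 m2 s0 s1 s2 s3 t0 t1 t2 t3 u0 v0)*(Mu/Lm) + (nT a b c d X Y P Q R S L K M N T l0 l1 l2 m0 m1 m2 s0 s1 s2 s3 t0 t1 t2 t3 u0 v0))/((c*X+d*Y) - (a*X+b*Y)*(Mu/Lm))"
proof -
  define J where "J = a*d - b*c"
  define D where "D = Y - X*p"
  define C where "C = (m0+m1*p+m2*p^2)*(a+b*p) - (c+d*p)*(l0+l1*p+l2*p^2)"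
  define Ah where "Ah = (cfA0 a b c d X Y P Q R S L K M N T l0 l1 l2 m0 m1 m2 s0 s1 s2 s3 t0 t1 t2 t3 u0 v0) + (cfA1 a b c d X Y P Q R S L K M N T l0 l1 l2 m0 m1 m2 s0 s1 s2 s3 t0 t1 t2 t3 u0 v0)*p + (cfA2 a b c d X Y P Q R S L K M N T l0 l1 l2 m0 m1 m2 s0 s1 s2 s3 t0 t1 t2 t3 u0 v0)*p^2"
  define Bh where "Bh = (cfB0 a b c d X Y P Q R S L K M N T l0 l1 l2 m0 m1 m2 s0 s1 s2 s3 t0 t1 t2 t3 u0 v0) + (cfB1 a b c d X Y P Q R S L K M N T l0 l1 l2 m0 m1 m2 s0 s1 s2 s3 t0 t1 t2 t3 u0 v0)*p + (cfB2 a b c d X Y P Q R S L K M N T l0 l1 l2 m0 m1 m2 s0 s1 s2 s3 t0 t1 t2 t3 u0 v0)*p^2 + (cfB3 a b c d X Y P Q R S L K M N T l0 l1 l2 m0 m1 m2 s0 s1 s2 s3 t0 t1 t2 t3 u0 v0)*p^3 + (cfB4 a b c d X Y P Q R S L K M N T l0 l1 l2 m0 m1 m2 s0 s1 s2 s3 t0 t1 t2 t3 u0 v0)*p^4 + (cfB5 a b c d X Y P Q R S L K M N T l0 l1 l2 m0 m1 m2 s0 s1 s2 s3 t0 t1 t2 t3 u0 v0)*p^5"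
  have lm': "a + b*p \<noteq> 0" using lm Lm by simp
  have J': "J \<noteq> 0" using J J_def by simp
  have D': "D \<noteq> 0" using Dn D_def by simp
  have PTe: "(Mu/Lm) = (c+d*p)/(a+b*p)" using Lm Mu by simp
  have Wq: "Mu1*Lm - Mu*Lm1 = C + J*q"
    unfolding Lm1 Mu1 C_def J_def Lm Mu by (simp add: algebra_simps)
  have QTe: "((((Mu1*Lm - Mu*Lm1)/Lm^2)/Lm)) = (C + J*q)/Lm^3"
    unfolding Wq by (simp add: eval_nat_numeral field_simps)
  have den: "(c*X+d*Y) - (a*X+b*Y)*(Mu/Lm) = J*D/Lm"
    unfolding PTe J_def D_def Lm Mu using lm' by (simp add: field_simps)
  have Apart: "(nP a b c d X Y P Q R S L K M N T l0 l1 l2 m0 m1 m2 s0 s1 s2 s3 t0 t1 t2 t3 u0 v0)*(Mu/Lm)^2 + (nQ a b c d X Y P Q R S L K M N T l0 l1 l2 m0 m1 m2 s0 s1 s2 s3 t0 t1 t2 t3 u0 v0)*(Mu/Lm) + (nR a b c d X Y P Q R S L K M N T l0 l1 l2 m0 m1 m2 s0 s1 s2 s3 t0 t1 t2 t3 u0 v0) = Ah/Lm^2"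
  proof -
    have "(nP a b c d X Y P Q R S L K M N T l0 l1 l2 m0 m1 m2 s0 s1 s2 s3 t0 t1 t2 t3 u0 v0)*(Mu/Lm)^2 + (nQ a b c d X Y P Q R S L K M N T l0 l1 l2 m0 m1 m2 s0 s1 s2 s3 t0 t1 t2 t3 u0 v0)*(Mu/Lm) + (nR a b c d X Y P Q R S L K M N T l0 l1 l2 m0 m1 m2 s0 s1 s2 s3 t0 t1 t2 t3 u0 v0) = ((cfA0 a b c d X Y P Q R S L K M N T l0 l1 l2 m0 m1 m2 s0 s1 s2 s3 t0 t1 t2 t3 u0 v0)*(d-b*(Mu/Lm))^2 + (cfA1 a b c d X Y P Q R S L K M N T l0 l1 l2 m0 m1 m2 s0 s1 s2 s3 t0 t1 t2 t3 u0 v0)*(d-b*(Mu/Lm))*(a*(Mu/Lm)-c) + (cfA2 a b c d X Y P Q R S L K M N T l0 l1 l2 m0 m1 m2 s0 s1 s2 s3 t0 t1 t2 t3 u0 v0)*(a*(Mu/Lm)-c)^2)/(a*d-b*c)^2"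
      unfolding nP_def nQ_def nR_def divsum2 quad_poly ..
    also have "\<dots> = Ah/Lm^2" apply (unfold PTe)
      apply (unfold pt_rel[OF lm'])
      apply (unfold Ah_def Lm)
      using quad_fin[OF J lm'] by simp
    finally show ?thesis .
  qed
  have Bpart: "(nS a b c d X Y P Q R S L K M N T l0 l1 l2 m0 m1 m2 s0 s1 s2 s3 t0 t1 t2 t3 u0 v0)*(Mu/Lm)^5 + (nL a b c d X Y P Q R S L K M N T l0 l1 l2 m0 m1 m2 s0 s1 s2 s3 t0 t1 t2 t3 u0 v0)*(Mu/Lm)^4 + (nK a b c d X Y P Q R S L K M N T l0 l1 l2 m0 m1 m2 s0 s1 s2 s3 t0 t1 t2 t3 u0 v0)*(Mu/Lm)^3 + (nM a b c d X Y P Q R S L K M N T l0 l1 l2 m0 m1 m2 s0 s1 s2 s3 t0 t1 t2 t3 u0 v0)*(Mu/Lm)^2 + (nN a b c d X Y P Q R S L K M N T l0 l1 l2 m0 m1 m2 s0 s1 s2 s3 t0 t1 t2 t3 u0 v0)*(Mu/Lm) + (nT a b c d X Y P Q R S L K M N T l0 l1 l2 m0 m1 m2 s0 s1 s2 s3 t0 t1 t2 t3 u0 v0) = Bh/Lm^5"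
  proof -
    have "(nS a b c d X Y P Q R S L K M N T l0 l1 l2 m0 m1 m2 s0 s1 s2 s3 t0 t1 t2 t3 u0 v0)*(Mu/Lm)^5 + (nL a b c d X Y P Q R S L K M N T l0 l1 l2 m0 m1 m2 s0 s1 s2 s3 t0 t1 t2 t3 u0 v0)*(Mu/Lm)^4 + (nK a b c d X Y P Q R S L K M N T l0 l1 l2 m0 m1 m2 s0 s1 s2 s3 t0 t1 t2 t3 u0 v0)*(Mu/Lm)^3 + (nM a b c d X Y P Q R S L K M N T l0 l1 l2 m0 m1 m2 s0 s1 s2 s3 t0 t1 t2 t3 u0 v0)*(Mu/Lm)^2 + (nN a b c d X Y P Q R S L K M N T l0 l1 l2 m0 m1 m2 s0 s1 s2 s3 t0 t1 t2 t3 u0 v0)*(Mu/Lm) + (nT a b c d X Y P Q R S L K M N T l0 l1 l2 m0 m1 m2 s0 s1 s2 s3 t0 t1 t2 t3 u0 v0)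
      = ((cfB0 a b c d X Y P Q R S L K M N T l0 l1 l2 m0 m1 m2 s0 s1 s2 s3 t0 t1 t2 t3 u0 v0)*(d-b*(Mu/Lm))^5*(a*(Mu/Lm)-c)^0 + (cfB1 a b c d X Y P Q R S L K M N T l0 l1 l2 m0 m1 m2 s0 s1 s2 s3 t0 t1 t2 t3 u0 v0)*(d-b*(Mu/Lm))^4*(a*(Mu/Lm)-c)^1 + (cfB2 a b c d X Y P Q R S L K M N T l0 l1 l2 m0 m1 m2 s0 s1 s2 s3 t0 t1 t2 t3 u0 v0)*(d-b*(Mu/Lm))^3*(a*(Mu/Lm)-c)^2 + (cfB3 a b c d X Y P Q R S L K M N T l0 l1 l2 m0 m1 m2 s0 s1 s2 s3 t0 t1 t2 t3 u0 v0)*(d-b*(Mu/Lm))^2*(a*(Mu/Lm)-c)^3 + (cfB4 a b c d X Y P Q R S L K M N T l0 l1 l2 m0 m1 m2 s0 s1 s2 s3 t0 t1 t2 t3 u0 v0)*(d-b*(Mu/Lm))^1*(a*(Mu/Lm)-c)^4 + (cfB5 a b c d X Y P Q R S L K M N T l0 l1 l2 m0 m1 m2 s0 s1 s2 s3 t0 t1 t2 t3 u0 v0)*(d-b*(Mu/Lm))^0*(a*(Mu/Lm)-c)^5)/(a*d-b*c)^5"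
      unfolding nS_def nL_def nK_def nM_def nN_def nT_def divsum5 quint_poly ..
    also have "\<dots> = Bh/Lm^5" apply (unfold PTe)
      apply (unfold pt_rel[OF lm'])
      apply (unfold Bh_def Lm)
      by (rule quint_fin[OF J lm'])
    finally show ?thesis .
  qed
  have num: "-3*(a*X+b*Y)*((((Mu1*Lm - Mu*Lm1)/Lm^2)/Lm))^2 + (nP a b c d X Y P Q R S L K M N T l0 l1 l2 m0 m1 m2 s0 s1 s2 s3 t0 t1 t2 t3 u0 v0)*((((Mu1*Lm - Mu*Lm1)/Lm^2)/Lm))*(Mu/Lm)^2 + (nQ a b c d X Y P Q R S L K M N T l0 l1 l2 m0 m1 m2 s0 s1 s2 s3 t0 t1 t2 t3 u0 v0)*((((Mu1*Lm - Mu*Lm1)/Lm^2)/Lm))*(Mu/Lm) + (nR a b c d X Y P Q R S L K M N T l0 l1 l2 m0 m1 m2 s0 s1 s2 s3 t0 t1 t2 t3 u0 v0)*((((Mu1*Lm - Mu*Lm1)/Lm^2)/Lm)) + (nS a b c d X Y P Q R S L K M N T l0 l1 l2 m0 m1 m2 s0 s1 s2 s3 t0 t1 t2 t3 u0 v0)*(Mu/Lm)^5 + (nL a b c d X Y P Q R S L K M N T l0 l1 l2 m0 m1 m2 s0 s1 s2 s3 t0 t1 t2 t3 u0 v0)*(Mu/Lm)^4 + (nK a b c d X Y P Q R S L K M N T l0 l1 l2 m0 m1 m2 s0 s1 s2 s3 t0 t1 t2 t3 u0 v0)*(Mu/Lm)^3 + (nM a b c d X Y P Q R S L K M N T l0 l1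 l2 m0 m1 m2 s0 s1 s2 s3 t0 t1 t2 t3 u0 v0)*(Mu/Lm)^2 + (nN a b c d X Y P Q R S L K M N T l0 l1 l2 m0 m1 m2 s0 s1 s2 s3 t0 t1 t2 t3 u0 v0)*(Mu/Lm) + (nT a b c d X Y P Q R S L K M N T l0 l1 l2 m0 m1 m2 s0 s1 s2 s3 t0 t1 t2 t3 u0 v0)
     = -3*(a*X+b*Y)*(((((Mu1*Lm - Mu*Lm1)/Lm^2)/Lm)))^2 + ((((Mu1*Lm - Mu*Lm1)/Lm^2)/Lm))*(Ah/Lm^2) + Bh/Lm^5"
    unfolding rearr Apart Bpart ..
  have rD: "(Y - X*p)*r = -3*X*q^2 + (R + Q*p + P*p^2)*q + (T + N*p + M*p^2 + K*p^3 + L*p^4 + S*p^5)"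
    using Dn unfolding r by (simp add: field_simps)
  have AhE: "(Y - X*p)*((v0 + 3*m2*p)*(a+b*p) - (u0 + 3*l2*p)*(c+d*p)) + (a*d-b*c)*(R + Q*p + P*p^2)
   + 3*((a*X+b*Y)*(m0+m1*p+m2*p^2) - (c*X+d*Y)*(l0+l1*p+l2*p^2))
   + 3*X*((m0+m1*p+m2*p^2)*(a+b*p) - (c+d*p)*(l0+l1*p+l2*p^2)) = Ah" unfolding Ah_def by (rule Ah_eq)
  have BhE: "(a*d-b*c)*(Y - X*p)*((t0+t1*p+t2*p^2+t3*p^3)*(a+b*p) - (c+d*p)*(s0+s1*p+s2*p^2+s3*p^3))
   + (a*d-b*c)^2*(T + N*p + M*p^2 + K*p^3 + L*p^4 + S*p^5)
   - ((m0+m1*p+m2*p^2)*(a+b*p) - (c+d*p)*(l0+l1*p+l2*p^2))*(Y - X*p)*((v0 + 3*m2*p)*(a+b*p) - (u0 + 3*l2*p)*(c+d*p))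
   - (a*d-b*c)*((m0+m1*p+m2*p^2)*(a+b*p) - (c+d*p)*(l0+l1*p+l2*p^2))*(R + Q*p + P*p^2)
   - 3*X*((m0+m1*p+m2*p^2)*(a+b*p) - (c+d*p)*(l0+l1*p+l2*p^2))^2 = Bh" unfolding Bh_def by (rule Bh_eq)
  note cr = core[where a=a and b=b and c=c and d=d and muB="t0 + t1*p + t2*p^2 + t3*p^3"
     and em="v0 + 3*m2*p" and lamB="s0 + s1*p + s2*p^2 + s3*p^3" and el="u0 + 3*l2*p"
     and lamA="l0+l1*p+l2*p^2" and muA="m0 + m1*p + m2*p^2", OF rD, unfolded AhE BhE]
  have stn: "((Mu2*Lm - Mu*Lm2)*Lm - 3*Lm1*(Mu1*Lm - Mu*Lm1)) = ((a+b*p)*((t0 + t1*p + t2*p^2 + t3*p^3 + (v0 + 3*m2*p)*q + d*r)*(a+b*p)-(c+d*p)*(s0 + s1*p + s2*p^2 + s3*p^3 + (u0 + 3*l2*p)*q + b*r))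
           -3*(l0+l1*p+l2*p^2+b*q)*(((m0 + m1*p + m2*p^2)*(a+b*p)-(c+d*p)*(l0+l1*p+l2*p^2))+(a*d-b*c)*q))"
    unfolding Lm Mu Lm1 Mu1 Lm2 Mu2 by algebra
  have l45: "Lm^4*Lm = Lm^5" by (simp add: eval_nat_numeral)
  have zz: "(((Mu2*Lm - Mu*Lm2)*Lm - 3*Lm1*(Mu1*Lm - Mu*Lm1))/Lm^4)/Lm
     = ((a+b*p)*((t0 + t1*p + t2*p^2 + t3*p^3 + (v0 + 3*m2*p)*q + d*r)*(a+b*p)-(c+d*p)*(s0 + s1*p + s2*p^2 + s3*p^3 + (u0 + 3*l2*p)*q + b*r))
           -3*(l0+l1*p+l2*p^2+b*q)*(((m0 + m1*p + m2*p^2)*(a+b*p)-(c+d*p)*(l0+l1*p+l2*p^2))+(a*d-b*c)*q))/Lm^5"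
    unfolding stn divide_divide_eq_left l45 ..
  show ?thesis
  proof
    show "(c*X+d*Y) - (a*X+b*Y)*(Mu/Lm) \<noteq> 0" using den J' D' lm by simp
    show "(((Mu2*Lm - Mu*Lm2)*Lm - 3*Lm1*(Mu1*Lm - Mu*Lm1))/Lm^4)/Lm
    = (-3*(a*X+b*Y)*((((Mu1*Lm - Mu*Lm1)/Lm^2)/Lm))^2 + (nP a b c d X Y P Q R S L K M N T l0 l1 l2 m0 m1 m2 s0 s1 s2 s3 t0 t1 t2 t3 u0 v0)*((((Mu1*Lm - Mu*Lm1)/Lm^2)/Lm))*(Mu/Lm)^2 + (nQ a b c d X Y P Q R S L K M N T l0 l1 l2 m0 m1 m2 s0 s1 s2 s3 t0 t1 t2 t3 u0 v0)*((((Mu1*Lm - Mu*Lm1)/Lm^2)/Lm))*(Mu/Lm) + (nR a b c d X Y P Q R S L K M N T l0 l1 l2 m0 m1 m2 s0 s1 s2 s3 t0 t1 t2 t3 u0 v0)*((((Mu1*Lm - Mu*Lm1)/Lm^2)/Lm)) + (nS a b c d X Y P Q R S L K M N T l0 l1 l2 m0 m1 m2 s0 s1 s2 s3 t0 t1 t2 t3 u0 v0)*(Mu/Lm)^5 + (nL a b c d X Y P Q R S L K M N T l0 l1 l2 m0 m1 m2 s0 s1 s2 s3 t0 t1 t2 t3 u0 v0)*(Mu/Lm)^4 + (nK a b c d X Y P Q R S L K M N T l0 l1 l2 m0 m1 m2 s0 s1 s2 s3 t0 t1 t2 t3 u0 v0)*(Mu/Lm)^3 + (nM a b c d X Y P Q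 R S L K M N T l0 l1 l2 m0 m1 m2 s0 s1 s2 s3 t0 t1 t2 t3 u0 v0)*(Mu/Lm)^2 + (nN a b c d X Y P Q R S L K M N T l0 l1 l2 m0 m1 m2 s0 s1 s2 s3 t0 t1 t2 t3 u0 v0)*(Mu/Lm) + (nT a b c d X Y P Q R S L K M N T l0 l1 l2 m0 m1 m2 s0 s1 s2 s3 t0 t1 t2 t3 u0 v0))/((c*X+d*Y) - (a*X+b*Y)*(Mu/Lm))"
      apply (unfold num)
      apply (unfold den zz)
      apply (unfold QTe)
      apply (rule fin_lem[OF J' D' lm])
      using cr unfolding J_def D_def C_def Lm by simp
  qed
qed

definition nX :: "real \<Rightarrow> real \<Rightarrow> real \<Rightarrow> real \<Rightarrow> real \<Rightarrow> real \<Rightarrow> real \<Rightarrow> real \<Rightarrow> real \<Rightarrow> real \<Rightarrow> real \<Rightarrow> real \<Rightarrow> real \<Rightarrow> real \<Rightarrow> real \<Rightarrow> real \<Rightarrow> real \<Rightarrow> real \<Rightarrow> real \<Rightarrow> real \<Rightarrow> real \<Rightarrow> real \<Rightarrow> real \<Rightarrow> real \<Rightarrow> real \<Rightarrow> real \<Rightarrow> real \<Rightarrow> real \<Rightarrow> real \<Rightarrow> real \<Rightarrow> real \<Rightarrow> real" where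
  "nX a b c d X Y P Q R S L K M N T l0 l1 l2 m0 m1 m2 s0 s1 s2 s3 t0 t1 t2 t3 u0 v0 = a*X + b*Y"

definition nY :: "real \<Rightarrow> real \<Rightarrow> real \<Rightarrow> real \<Rightarrow> real \<Rightarrow> real \<Rightarrow> real \<Rightarrow> real \<Rightarrow> real \<Rightarrow> real \<Rightarrow> real \<Rightarrow> real \<Rightarrow> real \<Rightarrow> real \<Rightarrow> real \<Rightarrow> real \<Rightarrow> real \<Rightarrow> real \<Rightarrow> real \<Rightarrow> real \<Rightarrow> real \<Rightarrow> real \<Rightarrow> real \<Rightarrow> real \<Rightarrow> real \<Rightarrow> real \<Rightarrow> real \<Rightarrow> real \<Rightarrow> real \<Rightarrow> real \<Rightarrow> real \<Rightarrow> real" where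
  "nY a b c d X Y P Q R S L K M N T l0 l1 l2 m0 m1 m2 s0 s1 s2 s3 t0 t1 t2 t3 u0 v0 = c*X + d*Y"

lemma pd_frechet:
  assumes f: "(f has_derivative f') (at z)"
  shows "pdx f z = f' (1,0)" "pdy f z = f' (0,1)"
proof -
  have lin: "linear f'" using f has_derivative_linear by blast
  have sc: "f' (r *\<^sub>R u) = r * f' u" for r u using linear_scale[OF lin] by simp
  have d1: "((\<lambda>x. (x, snd z)) has_derivative (\<lambda>h. (h, 0))) (at (fst z))"
    by (intro derivative_eq_intros) auto
  have "((f \<circ> (\<lambda>x. (x, snd z))) has_derivative (f' \<circ> (\<lambda>h. (h, 0)))) (at (fst z))"
    by (rule diff_chain_at[OF d1]) (simp add: f)
  moreover have "(f' \<circ> (\<lambda>h. (h, 0))) = (\<lambda>h. f' (1,0) * h)"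
  proof
    fix h :: real
    have e: "(h, 0::real) = h *\<^sub>R (1,0)" by simp
    show "(f' \<circ> (\<lambda>h. (h, 0))) h = f' (1,0) * h" unfolding o_def e sc by simp
  qed
  ultimately have "((\<lambda>x. f (x, snd z)) has_real_derivative f' (1,0)) (at (fst z))"
    by (simp add: has_field_derivative_def o_def)
  then show "pdx f z = f' (1,0)" unfolding pdx_def by (rule DERIV_imp_deriv)
  have d2: "((\<lambda>x. (fst z, x)) has_derivative (\<lambda>h. (0, h))) (at (snd z))"
    by (intro derivative_eq_intros) auto
  have "((f \<circ> (\<lambda>x. (fst z, x))) has_derivative (f' \<circ> (\<lambda>h. (0, h)))) (at (snd z))"
    by (rule diff_chain_at[OF d2]) (simp add: f)
  moreover have "(f' \<circ> (\<lambda>h. (0, h))) = (\<lambda>h. f' (0,1) * h)"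
  proof
    fix h :: real
    have e: "(0::real, h) = h *\<^sub>R (0,1)" by simp
    show "(f' \<circ> (\<lambda>h. (0, h))) h = f' (0,1) * h" unfolding o_def e sc by simp
  qed
  ultimately have "((\<lambda>x. f (fst z, x)) has_real_derivative f' (0,1)) (at (snd z))"
    by (simp add: has_field_derivative_def o_def)
  then show "pdy f z = f' (0,1)" unfolding pdy_def by (rule DERIV_imp_deriv)
qed

lemma chain:
  assumes f: "f differentiable (at (s, y s))" and y: "(y has_real_derivative y1) (at s)"
  shows "((\<lambda>s. f (s, y s)) has_real_derivative (pdx f (s, y s) + pdy f (s, y s) * y1)) (at s)"
proof -
  obtain f' where f': "(f has_derivative f') (at (s, y s))" using f unfolding differentiable_def by blast
  have lin: "linear f'" using f' has_derivative_linear by blast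
  have ad: "f' (u + v) = f' u + f' v" for u v using lin by (rule linear_add)
  have sc: "f' (r *\<^sub>R u) = r * f' u" for r u using linear_scale[OF lin] by simp
  have d1: "((\<lambda>x. (x, y x)) has_derivative (\<lambda>h. (h, y1 * h))) (at s)"
    using y unfolding has_field_derivative_def
    by (intro derivative_eq_intros) auto
  have "((f \<circ> (\<lambda>x. (x, y x))) has_derivative (f' \<circ> (\<lambda>h. (h, y1 * h)))) (at s)"
    by (rule diff_chain_at[OF d1]) (simp add: f')
  moreover have "(f' \<circ> (\<lambda>h. (h, y1 * h))) = (\<lambda>h. (f' (1,0) + f' (0,1) * y1) * h)"
  proof
    fix h :: real
    have e: "(h, y1 * h) = h *\<^sub>R (1,0) + (y1 * h) *\<^sub>R (0,1)" by simp
    have "f' (h, y1 * h) = h * f' (1,0) + (y1 * h) * f' (0,1)" unfolding e ad sc ..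
    then show "(f' \<circ> (\<lambda>h. (h, y1 * h))) h = (f' (1,0) + f' (0,1) * y1) * h"
      by (simp add: algebra_simps)
  qed
  ultimately show ?thesis using pd_frechet[OF f']
    by (simp add: has_field_derivative_def o_def)
qed


lemma Ck3:
  assumes "C_k 3 f"
  shows "\<forall>z. f differentiable (at z)" "\<forall>z. pdx f differentiable (at z)" "\<forall>z. pdy f differentiable (at z)"
    "\<forall>z. pdx (pdx f) differentiable (at z)" "\<forall>z. pdy (pdx f) differentiable (at z)"
    "\<forall>z. pdx (pdy f) differentiable (at z)" "\<forall>z. pdy (pdy f) differentiable (at z)"
  using assms by (simp_all add: numeral_3_eq_3 numeral_2_eq_2)

lemma curve:
  assumes Ck: "C_k 3 f"
    and dy: "\<forall>s\<in>U. y differentiable (at s) \<and> deriv y differentiable (at s) \<and> deriv (deriv y) differentiable (at s)"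
    and t: "t \<in> U"
  shows "\<forall>s\<in>U. ((\<lambda>s. f (s, y s)) has_real_derivative (pdx f (s, y s) + pdy f (s, y s) * deriv y s)) (at s)"
   "\<forall>s\<in>U. ((\<lambda>s. pdx f (s, y s) + pdy f (s, y s) * deriv y s) has_real_derivative
        ((pdx (pdx f) (s,y s) + pdy (pdx f) (s,y s) * deriv y s) + (pdx (pdy f) (s,y s) + pdy (pdy f) (s,y s) * deriv y s) * deriv y s + pdy f (s,y s) * deriv (deriv y) s)) (at s)"
   "((\<lambda>s. (pdx (pdx f) (s,y s) + pdy (pdx f) (s,y s) * deriv y s) + (pdx (pdy f) (s,y s) + pdy (pdy f) (s,y s) * deriv y s) * deriv y s + pdy f (s,y s) * deriv (deriv y) s)
      has_real_derivative
      (pdx (pdx (pdx f)) (t, y t)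
       + (pdy (pdx (pdx f)) (t, y t) + pdx (pdy (pdx f)) (t, y t) + pdx (pdx (pdy f)) (t, y t)) * deriv y t
       + (pdy (pdy (pdx f)) (t, y t) + pdy (pdx (pdy f)) (t, y t) + pdx (pdy (pdy f)) (t, y t)) * (deriv y t)^2
       + pdy (pdy (pdy f)) (t, y t) * (deriv y t)^3
       + (pdy (pdx f) (t, y t) + 2 * pdx (pdy f) (t, y t) + 3 * pdy (pdy f) (t, y t) * deriv y t) * deriv (deriv y) t
       + pdy f (t, y t) * deriv (deriv (deriv y)) t)) (at t)"
proof -
  note D = Ck3[OF Ck]
  have dy0: "(y has_real_derivative deriv y s) (at s)" if "s \<in> U" for s
    using dy that DERIV_deriv_iff_real_differentiable by blast
  have dy1: "(deriv y has_real_derivative deriv (deriv y) s) (at s)" if "s \<in> U" for s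
    using dy that DERIV_deriv_iff_real_differentiable by blast
  have dy2: "(deriv (deriv y) has_real_derivative deriv (deriv (deriv y)) t) (at t)"
    using dy t DERIV_deriv_iff_real_differentiable by blast
  have dG: "((\<lambda>s. g (s, y s)) has_real_derivative (pdx g (s, y s) + pdy g (s, y s) * deriv y s)) (at s)"
    if "\<forall>z. g differentiable (at z)" "s \<in> U" for g s
    using chain[OF _ dy0[OF that(2)]] that(1) by blast
  show "\<forall>s\<in>U. ((\<lambda>s. f (s, y s)) has_real_derivative (pdx f (s, y s) + pdy f (s, y s) * deriv y s)) (at s)"
    using dG D(1) by blast
  show "\<forall>s\<in>U. ((\<lambda>s. pdx f (s, y s) + pdy f (s, y s) * deriv y s) has_real_derivative
        ((pdx (pdx f) (s,y s) + pdy (pdx f) (s,y s) * deriv y s) + (pdx (pdy f) (s,y s) + pdy (pdy f) (s,y s) * deriv y s) * deriv y s + pdy f (s,y s) * deriv (deriv y) s)) (at s)"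
  proof
    fix s assume s: "s \<in> U"
    show "((\<lambda>s. pdx f (s, y s) + pdy f (s, y s) * deriv y s) has_real_derivative
        ((pdx (pdx f) (s,y s) + pdy (pdx f) (s,y s) * deriv y s) + (pdx (pdy f) (s,y s) + pdy (pdy f) (s,y s) * deriv y s) * deriv y s + pdy f (s,y s) * deriv (deriv y) s)) (at s)"
      apply (rule DERIV_cong)
       apply (rule DERIV_add[OF dG[OF D(2) s] DERIV_mult[OF dG[OF D(3) s] dy1[OF s]]])
      by (simp add: algebra_simps)
  qed
  have dd: "((\<lambda>s. g (s, y s) + h (s, y s) * deriv y s) has_real_derivative
        ((pdx g (t,y t) + pdy g (t,y t) * deriv y t) + (pdx h (t,y t) + pdy h (t,y t) * deriv y t) * deriv y t + h (t,y t) * deriv (deriv y) t)) (at t)"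
    if "\<forall>z. g differentiable (at z)" "\<forall>z. h differentiable (at z)" for g h
      apply (rule DERIV_cong)
       apply (rule DERIV_add[OF dG[OF that(1) t] DERIV_mult[OF dG[OF that(2) t] dy1[OF t]]])
      by (simp add: algebra_simps)
  show "((\<lambda>s. (pdx (pdx f) (s,y s) + pdy (pdx f) (s,y s) * deriv y s) + (pdx (pdy f) (s,y s) + pdy (pdy f) (s,y s) * deriv y s) * deriv y s + pdy f (s,y s) * deriv (deriv y) s)
      has_real_derivative
      (pdx (pdx (pdx f)) (t, y t)
       + (pdy (pdx (pdx f)) (t, y t) + pdx (pdy (pdx f)) (t, y t) + pdx (pdx (pdy f)) (t, y t)) * deriv y t
       + (pdy (pdy (pdx f)) (t, y t) + pdy (pdx (pdy f)) (t, y t) + pdx (pdy (pdy f)) (t, y t)) * (deriv y t)^2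
       + pdy (pdy (pdy f)) (t, y t) * (deriv y t)^3
       + (pdy (pdx f) (t, y t) + 2 * pdx (pdy f) (t, y t) + 3 * pdy (pdy f) (t, y t) * deriv y t) * deriv (deriv y) t
       + pdy f (t, y t) * deriv (deriv (deriv y)) t)) (at t)"
    apply (rule DERIV_cong)
     apply (rule DERIV_add[OF DERIV_add[OF dd[OF D(4) D(5)] DERIV_mult[OF dd[OF D(6) D(7)] dy1[OF t]]]
                   DERIV_mult[OF dG[OF D(3) t] dy2]])
    by (simp add: algebra_simps power2_eq_square power3_eq_cube)
qed


definition ev where
  "ev F \<xi> \<eta> X Y P Q R S L K M N T z = F (pdx \<xi> z) (pdy \<xi> z) (pdx \<eta> z) (pdy \<eta> z)
     (X (fst z) (snd z)) (Y (fst z) (snd z)) (P (fst z) (snd z)) (Q (fst z) (snd z)) (R (fst z) (snd z))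
     (S (fst z) (snd z)) (L (fst z) (snd z)) (K (fst z) (snd z)) (M (fst z) (snd z)) (N (fst z) (snd z)) (T (fst z) (snd z))
     (pdx (pdx \<xi>) z) (pdy (pdx \<xi>) z + pdx (pdy \<xi>) z) (pdy (pdy \<xi>) z)
     (pdx (pdx \<eta>) z) (pdy (pdx \<eta>) z + pdx (pdy \<eta>) z) (pdy (pdy \<eta>) z)
     (pdx (pdx (pdx \<xi>)) z) (pdy (pdx (pdx \<xi>)) z + pdx (pdy (pdx \<xi>)) z + pdx (pdx (pdy \<xi>)) z)
     (pdy (pdy (pdx \<xi>)) z + pdy (pdx (pdy \<xi>)) z + pdx (pdy (pdy \<xi>)) z) (pdy (pdy (pdy \<xi>)) z)
     (pdx (pdx (pdx \<eta>)) z) (pdy (pdx (pdx \<eta>)) z + pdx (pdy (pdx \<eta>)) z + pdx (pdx (pdy \<eta>)) z)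
     (pdy (pdy (pdx \<eta>)) z + pdy (pdx (pdy \<eta>)) z + pdx (pdy (pdy \<eta>)) z) (pdy (pdy (pdy \<eta>)) z)
     (pdy (pdx \<xi>) z + 2 * pdx (pdy \<xi>) z) (pdy (pdx \<eta>) z + 2 * pdx (pdy \<eta>) z)"

lemma dq_aux:
  fixes l l1 L2 m m1 m2 :: real
  assumes "l \<noteq> 0"
  shows "((m2 * l + l1 * m1 - (m1 * l1 + L2 * m)) * l ^ 3 - real 3 * (l1 * l ^ (3 - Suc 0)) * (m1 * l - m * l1)) / (l ^ 3) ^ Suc (Suc 0)
     = ((m2 * l - m * L2) * l - 3 * l1 * (m1 * l - m * l1)) / l ^ 4"
proof -
  have e: "((m2 * l + l1 * m1 - (m1 * l1 + L2 * m)) * l ^ 3 - real 3 * (l1 * l ^ (3 - Suc 0)) * (m1 * l - m * l1))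
     = l^2 * ((m2 * l - m * L2) * l - 3 * l1 * (m1 * l - m * l1))"
    by (simp add: eval_nat_numeral algebra_simps)
  have f: "(l ^ 3) ^ Suc (Suc 0) = l^2 * l^4" by (simp add: eval_nat_numeral)
  show ?thesis unfolding e f by (rule nonzero_mult_divide_mult_cancel_left) (use assms in simp)
qed

theorem theorem1:
  fixes X Y P Q R S L K M N T :: "real \<Rightarrow> real \<Rightarrow> real"
    and \<xi> \<eta> :: "real \<times> real \<Rightarrow> real"
  assumes "C_k 3 \<xi>" and "C_k 3 \<eta>"
    and "inj (\<lambda>z. (\<xi> z, \<eta> z))"
    and "\<forall>z. pdx \<xi> z * pdy \<eta> z - pdy \<xi> z * pdx \<eta> z \<noteq> 0"
  shows "\<exists>X' Y' P' Q' R' S' L' K' M' N' T' :: real \<Rightarrow> real \<Rightarrow> real.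
    \<forall>(y :: real \<Rightarrow> real) (U :: real set) (t :: real).
      open U \<and> t \<in> U
      \<and> (\<forall>s\<in>U. y differentiable (at s) \<and> deriv y differentiable (at s)
                \<and> deriv (deriv y) differentiable (at s))
      \<and> deriv (tx \<xi> y) t \<noteq> 0
      \<and> Y t (y t) - X t (y t) * deriv y t \<noteq> 0
      \<and> deriv (deriv (deriv y)) t
          = class_rhs X Y P Q R S L K M N T t (y t) (deriv y t) (deriv (deriv y) t)
      \<longrightarrow> Y' (tx \<xi> y t) (ty \<eta> y t) - X' (tx \<xi> y t) (ty \<eta> y t) * tp \<xi> \<eta> y t \<noteq> 0
        \<and> tr \<xi> \<eta> y t
          = class_rhs X' Y' P' Q' R' S' L' K' M' N' T'
              (tx \<xi> y t) (ty \<eta> y t) (tp \<xi> \<eta> y t) (tq \<xi> \<eta> y t)"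
proof -
  define W :: "(real \<Rightarrow> real \<Rightarrow> real \<Rightarrow> real \<Rightarrow> real \<Rightarrow> real \<Rightarrow> real \<Rightarrow> real \<Rightarrow> real \<Rightarrow> real \<Rightarrow> real \<Rightarrow> real \<Rightarrow> real \<Rightarrow> real \<Rightarrow> real \<Rightarrow> real \<Rightarrow> real \<Rightarrow> real \<Rightarrow> real \<Rightarrow> real \<Rightarrow> real \<Rightarrow> real \<Rightarrow> real \<Rightarrow> real \<Rightarrow> real \<Rightarrow> real \<Rightarrow> real \<Rightarrow> real \<Rightarrow> real \<Rightarrow> real \<Rightarrow> real \<Rightarrow> real) \<Rightarrow> real \<Rightarrow> real \<Rightarrow> real" where "W = (\<lambda>F u v. ev F \<xi> \<eta> X Y P Q R S L K M N T (inv (\<lambda>z. (\<xi> z, \<eta> z)) (u, v)))"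
  show ?thesis
  proof (rule exI[of _ "W nX"], rule exI[of _ "W nY"], rule exI[of _ "W nP"], rule exI[of _ "W nQ"], rule exI[of _ "W nR"], rule exI[of _ "W nS"], rule exI[of _ "W nL"], rule exI[of _ "W nK"], rule exI[of _ "W nM"], rule exI[of _ "W nN"], rule exI[of _ "W nT"], intro allI impI)
    fix y :: "real \<Rightarrow> real" and U :: "real set" and t :: real
    assume H: "open U \<and> t \<in> U
      \<and> (\<forall>s\<in>U. y differentiable (at s) \<and> deriv y differentiable (at s)
                \<and> deriv (deriv y) differentiable (at s))
      \<and> deriv (tx \<xi> y) t \<noteq> 0
      \<and> Y t (y t) - X t (y t) * deriv y t \<noteq> 0
      \<and> deriv (deriv (deriv y)) t
          = class_rhs X Y P Q R S L K M N T t (y t) (deriv y t) (deriv (deriv y) t)"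
    then have U: "open U" and t: "t \<in> U"
      and dy: "\<forall>s\<in>U. y differentiable (at s) \<and> deriv y differentiable (at s) \<and> deriv (deriv y) differentiable (at s)"
      and dtx: "deriv (tx \<xi> y) t \<noteq> 0"
      and Dn: "Y t (y t) - X t (y t) * deriv y t \<noteq> 0"
      and r0: "deriv (deriv (deriv y)) t = class_rhs X Y P Q R S L K M N T t (y t) (deriv y t) (deriv (deriv y) t)"
      by auto
    have invz: "inv (\<lambda>z. (\<xi> z, \<eta> z)) (\<xi> (t, y t), \<eta> (t, y t)) = (t, y t)"
      using inv_f_f[OF assms(3), of "(t, y t)"] by simp
    note cx = curve[OF assms(1) dy t] and ce = curve[OF assms(2) dy t]
    define Lm where "Lm = (\<lambda>s. pdx \<xi> (s, y s) + pdy \<xi> (s, y s) * deriv y s)"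
    define Mu where "Mu = (\<lambda>s. pdx \<eta> (s, y s) + pdy \<eta> (s, y s) * deriv y s)"
    define Lm1 where "Lm1 = (\<lambda>s. (pdx (pdx \<xi>) (s,y s) + pdy (pdx \<xi>) (s,y s) * deriv y s) + (pdx (pdy \<xi>) (s,y s) + pdy (pdy \<xi>) (s,y s) * deriv y s) * deriv y s + pdy \<xi> (s,y s) * deriv (deriv y) s)"
    define Mu1 where "Mu1 = (\<lambda>s. (pdx (pdx \<eta>) (s,y s) + pdy (pdx \<eta>) (s,y s) * deriv y s) + (pdx (pdy \<eta>) (s,y s) + pdy (pdy \<eta>) (s,y s) * deriv y s) * deriv y s + pdy \<eta> (s,y s) * deriv (deriv y) s)"
    define Lm2 where "Lm2 = pdx (pdx (pdx \<xi>)) (t, y t)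
       + (pdy (pdx (pdx \<xi>)) (t, y t) + pdx (pdy (pdx \<xi>)) (t, y t) + pdx (pdx (pdy \<xi>)) (t, y t)) * deriv y t
       + (pdy (pdy (pdx \<xi>)) (t, y t) + pdy (pdx (pdy \<xi>)) (t, y t) + pdx (pdy (pdy \<xi>)) (t, y t)) * (deriv y t)^2
       + pdy (pdy (pdy \<xi>)) (t, y t) * (deriv y t)^3
       + (pdy (pdx \<xi>) (t, y t) + 2 * pdx (pdy \<xi>) (t, y t) + 3 * pdy (pdy \<xi>) (t, y t) * deriv y t) * deriv (deriv y) t
       + pdy \<xi> (t, y t) * deriv (deriv (deriv y)) t"
    define Mu2 where "Mu2 = pdx (pdx (pdx \<eta>)) (t, y t)
       + (pdy (pdx (pdx \<eta>)) (t, y t) + pdx (pdy (pdx \<eta>)) (t, y t) + pdx (pdx (pdy \<eta>)) (t, y t)) * deriv y t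
       + (pdy (pdy (pdx \<eta>)) (t, y t) + pdy (pdx (pdy \<eta>)) (t, y t) + pdx (pdy (pdy \<eta>)) (t, y t)) * (deriv y t)^2
       + pdy (pdy (pdy \<eta>)) (t, y t) * (deriv y t)^3
       + (pdy (pdx \<eta>) (t, y t) + 2 * pdx (pdy \<eta>) (t, y t) + 3 * pdy (pdy \<eta>) (t, y t) * deriv y t) * deriv (deriv y) t
       + pdy \<eta> (t, y t) * deriv (deriv (deriv y)) t"
    have dLm: "(Lm has_real_derivative Lm1 s) (at s)" if "s \<in> U" for s
      using cx(2) that unfolding Lm_def Lm1_def by blast
    have dMu: "(Mu has_real_derivative Mu1 s) (at s)" if "s \<in> U" for s
      using ce(2) that unfolding Mu_def Mu1_def by blast
    have dLm1: "(Lm1 has_real_derivative Lm2) (at t)"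
      using cx(3) unfolding Lm1_def Lm2_def .
    have dMu1: "(Mu1 has_real_derivative Mu2) (at t)"
      using ce(3) unfolding Mu1_def Mu2_def .
    have dtxU: "deriv (tx \<xi> y) s = Lm s" if "s \<in> U" for s
      using cx(1) that unfolding tx_def Lm_def by (blast intro: DERIV_imp_deriv)
    have dtyU: "deriv (ty \<eta> y) s = Mu s" if "s \<in> U" for s
      using ce(1) that unfolding ty_def Mu_def by (blast intro: DERIV_imp_deriv)
    have tpU: "tp \<xi> \<eta> y s = Mu s / Lm s" if "s \<in> U" for s
      unfolding tp_def using dtxU[OF that] dtyU[OF that] by simp
    have lm0: "Lm t \<noteq> 0" using dtx dtxU[OF t] by simp
    have "isCont Lm t" using dLm[OF t] DERIV_isCont by blast
    then obtain e where e: "e > 0" "\<forall>s. dist t s < e \<longrightarrow> Lm s \<noteq> 0"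
      using continuous_at_avoid[of t Lm 0] lm0 by blast
    define V where "V = U \<inter> ball t e"
    have V: "open V" "t \<in> V" "V \<subseteq> U" unfolding V_def using U t e(1) by auto
    have lmV: "Lm s \<noteq> 0" if "s \<in> V" for s using e(2) that unfolding V_def by (auto simp: dist_commute)
    have dtp: "(tp \<xi> \<eta> y has_real_derivative (Mu1 s * Lm s - Mu s * Lm1 s)/(Lm s)^2) (at s)" if s: "s \<in> V" for s
    proof -
      have sU: "s \<in> U" using s V by auto
      have "((\<lambda>s. Mu s / Lm s) has_real_derivative (Mu1 s * Lm s - Mu s * Lm1 s)/(Lm s)^2) (at s)"
        apply (rule DERIV_cong)
         apply (rule DERIV_quotient[OF dMu[OF sU] dLm[OF sU] lmV[OF s]])
        by (simp add: power2_eq_square mult.commute)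
      then show ?thesis
        by (rule has_field_derivative_transform_within_open[OF _ U sU]) (simp add: tpU)
    qed
    have tqV: "tq \<xi> \<eta> y s = (Mu1 s * Lm s - Mu s * Lm1 s)/(Lm s)^3" if s: "s \<in> V" for s
    proof -
      have sU: "s \<in> U" using s V by auto
      show ?thesis unfolding tq_def DERIV_imp_deriv[OF dtp[OF s]] dtxU[OF sU]
        using lmV[OF s] by (simp add: eval_nat_numeral field_simps)
    qed
    define D3 where "D3 = (((Mu2*Lm t - Mu t*Lm2)*Lm t - 3*Lm1 t*(Mu1 t*Lm t - Mu t*Lm1 t))/Lm t^4)"
    have dtq: "(tq \<xi> \<eta> y has_real_derivative D3) (at t)"
    proof -
      have "((\<lambda>s. (Mu1 s * Lm s - Mu s * Lm1 s)/(Lm s)^3) has_real_derivative D3) (at t)"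
        apply (rule DERIV_cong)
         apply (rule DERIV_quotient[OF DERIV_diff[OF DERIV_mult[OF dMu1 dLm[OF t]] DERIV_mult[OF dMu[OF t] dLm1]] DERIV_power[OF dLm[OF t]]])
         apply (simp add: lm0)
        unfolding D3_def by (rule dq_aux[OF lm0])
      then show ?thesis
        by (rule has_field_derivative_transform_within_open[OF _ V(1) V(2)]) (simp add: tqV)
    qed
    have trt: "tr \<xi> \<eta> y t = D3 / Lm t"
      unfolding tr_def DERIV_imp_deriv[OF dtq] dtxU[OF t] ..
    have tpt: "tp \<xi> \<eta> y t = Mu t / Lm t" using tpU[OF t] .
    have tqt: "tq \<xi> \<eta> y t = ((Mu1 t * Lm t - Mu t * Lm1 t)/(Lm t)^2)/Lm t"
      unfolding tqV[OF V(2)] using lm0 by (simp add: eval_nat_numeral field_simps)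
    have J: "pdx \<xi> (t, y t) * pdy \<eta> (t, y t) - pdy \<xi> (t, y t) * pdx \<eta> (t, y t) \<noteq> 0" using assms(4) by blast
    have r: "deriv (deriv (deriv y)) t = (- 3 * X t (y t) * (deriv (deriv y) t)^2 + P t (y t) * deriv (deriv y) t * (deriv y t)^2
       + Q t (y t) * deriv (deriv y) t * deriv y t + R t (y t) * deriv (deriv y) t
       + S t (y t) * (deriv y t)^5 + L t (y t) * (deriv y t)^4 + K t (y t) * (deriv y t)^3 + M t (y t) * (deriv y t)^2
       + N t (y t) * deriv y t + T t (y t)) / (Y t (y t) - X t (y t) * deriv y t)"
      using r0 unfolding class_rhs_def .
    have eLm: "Lm t = pdx \<xi> (t, y t) + pdy \<xi> (t, y t) * deriv y t" unfolding Lm_def ..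
    have eMu: "Mu t = pdx \<eta> (t, y t) + pdy \<eta> (t, y t) * deriv y t" unfolding Mu_def ..
    have eLm1: "Lm1 t = pdx (pdx \<xi>) (t, y t) + (pdy (pdx \<xi>) (t, y t) + pdx (pdy \<xi>) (t, y t)) * deriv y t
       + pdy (pdy \<xi>) (t, y t) * (deriv y t)^2 + pdy \<xi> (t, y t) * deriv (deriv y) t"
      unfolding Lm1_def by (simp add: algebra_simps power2_eq_square)
    have eMu1: "Mu1 t = pdx (pdx \<eta>) (t, y t) + (pdy (pdx \<eta>) (t, y t) + pdx (pdy \<eta>) (t, y t)) * deriv y t
       + pdy (pdy \<eta>) (t, y t) * (deriv y t)^2 + pdy \<eta> (t, y t) * deriv (deriv y) t"
      unfolding Mu1_def by (simp add: algebra_simps power2_eq_square)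
    note A = alg_main[OF J lm0 Dn r eLm eMu eLm1 eMu1 Lm2_def Mu2_def]
    have hxt: "tx \<xi> y t = \<xi> (t, y t)" by (simp add: tx_def)
    have hyt: "ty \<eta> y t = \<eta> (t, y t)" by (simp add: ty_def)
    show "W nY (tx \<xi> y t) (ty \<eta> y t) - W nX (tx \<xi> y t) (ty \<eta> y t) * tp \<xi> \<eta> y t \<noteq> 0 \<and>
       tr \<xi> \<eta> y t = class_rhs (W nX) (W nY) (W nP) (W nQ) (W nR) (W nS) (W nL) (W nK) (W nM) (W nN) (W nT)
              (tx \<xi> y t) (ty \<eta> y t) (tp \<xi> \<eta> y t) (tq \<xi> \<eta> y t)"
      unfolding class_rhs_def hxt hyt W_def invz ev_def fst_conv snd_conv nX_def nY_def tpt tqt trt D3_def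
      by (rule A)
  qed
qed

end
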